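(* Let $\Omega\subset\mathbb{R}^n$ be a domain with $n>2$, and let $U$ be a mesa function on $\Omega$ (as defined in the context) with exponent $\alpha$, where $0<\alpha<\frac{n-2}{2}$. Then $U\in H^1(\Omega)$.
   Context: $H^1(\Omega)$ denotes the Sobolev space of $L^2(\Omega)$ functions whose weak first derivatives lie in $L^2(\Omega)$. Mesa function: fix $c\in\Omega$, $T>0$ with $\overline{B(c,T)}\subset\Omega$ (open ball $B(c,T)$ compactly contained in $\Omega$), real numbers $a<b$, and an exponent $\alpha\in(0,\frac{n-2}{2})$. Write $r=|x-c|$. Define radii inductively: $r_1^+=T/2$; given $r_m^+$, let $s_m^+\in(0,r_m^+)$ be the number with $(s_m^+)^{-\alpha}-(r_m^+)^{-\alpha}=b-a$; set $s_m^-=s_m^+/2$; let $r_m^-\in(0,s_m^-)$ be the number with $(r_m^-)^{-\alpha}-(s_m^-)^{-\alpha}=b-a$; set $r_{m+1}^+=r_m^-/2$. The mesa function $U$ (defined for $x\neq c$) is the radial function $U=0$ for $r\ge T$; $U=-\frac{2a}{T}r+2a$ for $r_1^+\le r\le T$; and for each $m\ge1$: $U=r^{-\alpha}-(r_m^+)^{-\alpha}+a$ for $s_m^+\le r\le r_m^+$; $U=b$ for $s_m^-\le r\le s_m^+$; $U=b-(r^{-\alpha}-(s_m^-)^{-\alpha})$ for $r_m^-\le r\le s_m^-$; $U=a$ for $r_{m+1}^+\le r\le r_m^-$. *)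

theory Defs
  imports "HOL-Analysis.Analysis"
begin

definition pderiv_i :: "'n::finite \<Rightarrow> (real^'n \<Rightarrow> real) \<Rightarrow> (real^'n \<Rightarrow> real)" where
  "pderiv_i i f = (\<lambda>x. frechet_derivative f (at x) (axis i 1))"

text \<open>Test functions C_c^infinity(Omega): all iterated partial derivatives exist and are
  (Frechet) differentiable everywhere (hence phi is C^infinity), and phi vanishes outside a
  compact subset of Omega.\<close>
definition test_fun :: "(real^'n::finite) set \<Rightarrow> (real^'n \<Rightarrow> real) \<Rightarrow> bool" where
  "test_fun \<Omega> \<phi> \<longleftrightarrow>
     (\<forall>is :: 'n list. \<forall>x. (foldr pderiv_i is \<phi>) differentiable (at x)) \<and>
     (\<exists>K. compact K \<and> K \<subseteq> \<Omega> \<and> (\<forall>x. x \<notin> K \<longrightarrow> \<phi> x = 0))"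

definition L2_on :: "(real^'n::finite) set \<Rightarrow> (real^'n \<Rightarrow> real) \<Rightarrow> bool" where
  "L2_on \<Omega> u \<longleftrightarrow> u \<in> borel_measurable (lebesgue_on \<Omega>) \<and>
                    integrable (lebesgue_on \<Omega>) (\<lambda>x. (u x)\<^sup>2)"

definition weak_pderiv :: "(real^'n::finite) set \<Rightarrow> 'n \<Rightarrow> (real^'n \<Rightarrow> real) \<Rightarrow> (real^'n \<Rightarrow> real) \<Rightarrow> bool" where
  "weak_pderiv \<Omega> i u g \<longleftrightarrow>
     (\<forall>\<phi>. test_fun \<Omega> \<phi> \<longrightarrow>
        integrable (lebesgue_on \<Omega>) (\<lambda>x. u x * pderiv_i i \<phi> x) \<and>
        integrable (lebesgue_on \<Omega>) (\<lambda>x. g x * \<phi> x) \<and>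
        (\<integral>x. u x * pderiv_i i \<phi> x \<partial>lebesgue_on \<Omega>) = - (\<integral>x. g x * \<phi> x \<partial>lebesgue_on \<Omega>))"

definition H1 :: "(real^'n::finite) set \<Rightarrow> (real^'n \<Rightarrow> real) \<Rightarrow> bool" where
  "H1 \<Omega> u \<longleftrightarrow> L2_on \<Omega> u \<and> (\<forall>i. \<exists>g. L2_on \<Omega> g \<and> weak_pderiv \<Omega> i u g)"

text \<open>Given r = r_m^+, the number s in (0,r) with s^(-alpha) - r^(-alpha) = b - a.\<close>
definition mesa_sp :: "real \<Rightarrow> real \<Rightarrow> real \<Rightarrow> real \<Rightarrow> real" where
  "mesa_sp a b \<alpha> r = (r powr (-\<alpha>) + (b - a)) powr (-1/\<alpha>)"

definition mesa_sm :: "real \<Rightarrow> real \<Rightarrow> real \<Rightarrow> real \<Rightarrow> real" where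
  "mesa_sm a b \<alpha> r = mesa_sp a b \<alpha> r / 2"

text \<open>r_m^- in (0, s_m^-) with r^(-alpha) - (s_m^-)^(-alpha) = b - a.\<close>
definition mesa_rm :: "real \<Rightarrow> real \<Rightarrow> real \<Rightarrow> real \<Rightarrow> real" where
  "mesa_rm a b \<alpha> r = (mesa_sm a b \<alpha> r powr (-\<alpha>) + (b - a)) powr (-1/\<alpha>)"

text \<open>mesa_rp T a b alpha k = r_(k+1)^+ (0-based indexing): r_1^+ = T/2,
  r_(m+1)^+ = r_m^- / 2.\<close>
primrec mesa_rp :: "real \<Rightarrow> real \<Rightarrow> real \<Rightarrow> real \<Rightarrow> nat \<Rightarrow> real" where
  "mesa_rp T a b \<alpha> 0 = T / 2"
| "mesa_rp T a b \<alpha> (Suc k) = mesa_rm a b \<alpha> (mesa_rp T a b \<alpha> k) / 2"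

text \<open>Radial profile of the mesa function, for rho > 0. On the k-th block
  [r_(k+2)^+, r_(k+1)^+) the formulas of the paper are used (0-based k).\<close>
definition mesa_profile :: "real \<Rightarrow> real \<Rightarrow> real \<Rightarrow> real \<Rightarrow> real \<Rightarrow> real" where
  "mesa_profile T a b \<alpha> \<rho> =
    (if \<rho> \<ge> T then 0
     else if \<rho> \<ge> T / 2 then - (2 * a / T) * \<rho> + 2 * a
     else
       (let k = (SOME k. mesa_rp T a b \<alpha> (Suc k) \<le> \<rho> \<and> \<rho> < mesa_rp T a b \<alpha> k);
            rp = mesa_rp T a b \<alpha> k;
            sp = mesa_sp a b \<alpha> rp;
            sm = mesa_sm a b \<alpha> rp;
            rm = mesa_rm a b \<alpha> rp
        in if sp \<le> \<rho> then \<rho> powr (-\<alpha>) - rp powr (-\<alpha>) + a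
           else if sm \<le> \<rho> then b
           else if rm \<le> \<rho> then b - (\<rho> powr (-\<alpha>) - sm powr (-\<alpha>))
           else a))"

text \<open>The mesa function U(x) = profile(|x - c|) for x \<noteq> c; the value at x = c (a null set)
  is irrelevant and set to 0.\<close>
definition mesa :: "real^'n::finite \<Rightarrow> real \<Rightarrow> real \<Rightarrow> real \<Rightarrow> real \<Rightarrow> real^'n \<Rightarrow> real" where
  "mesa c T a b \<alpha> x = (if x = c then 0 else mesa_profile T a b \<alpha> (norm (x - c)))"

end

theory Submission
  imports Defs "HOL-Analysis.Analysis"
begin

lemma powr_shell_a: fixes R p :: real assumes R: "R > 0"
  shows "(R / 2^(Suc k)) powr (-p) = R powr (-p) * 2 powr p * (2 powr p) ^ k"
proof -
  have a1: "(2::real)^(Suc k) = 2 powr (real (Suc k))" by (rule powr_realpow[symmetric]) simp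
  have "(R / 2^(Suc k)) powr (-p) = R powr (-p) / (2 powr (real (Suc k))) powr (-p)"
    unfolding a1 using R by (simp add: powr_divide)
  also have "(2 powr (real (Suc k))) powr (-p) = 2 powr (- (real (Suc k) * p))" by (simp add: powr_powr)
  also have "R powr (-p) / 2 powr (- (real (Suc k) * p)) = R powr (-p) * 2 powr (real (Suc k) * p)"
    by (simp add: powr_minus divide_inverse)
  also have "2 powr (real (Suc k) * p) = 2 powr p * (2 powr p) ^ k"
    by (simp add: powr_power powr_add[symmetric] algebra_simps)
  finally show ?thesis by simp
qed
lemma powr_shell_b: fixes R :: real assumes R: "R > 0"
  shows "(R / 2^k) ^ n = R ^ n * (2 powr (- real n)) ^ k"
proof -
  have "(2 powr (- real n)) ^ k = inverse ((2::real) ^ k) ^ n"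
    by (simp add: powr_power powr_minus powr_realpow[symmetric] powr_powr mult.commute power_inverse)
  then show ?thesis by (simp add: power_divide divide_inverse power_mult_distrib)
qed

lemma exists_shell:
  fixes R t :: real
  assumes "0 < t" "t \<le> R"
  shows "\<exists>j. R / 2^(Suc j) < t \<and> t \<le> R / 2^j"
proof -
  have R: "R > 0" using assms by simp
  obtain N where "(1/2::real)^N < t / R" using real_arch_pow_inv[of "t/R" "1/2"] assms R by auto
  then have N: "R / 2^N < t" using R by (simp add: field_simps power_divide)
  define j where "j = (LEAST j. R / 2^(Suc j) < t)"
  have "R / 2^(Suc N) < R / 2^N" using R by (simp add: field_simps)
  then have ex: "R / 2^(Suc N) < t" using N by linarith
  have j1: "R / 2^(Suc j) < t" unfolding j_def by (rule LeastI[of _ N]) (rule ex)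
  have j2: "t \<le> R / 2^j"
  proof (cases j)
    case 0 then show ?thesis using assms by simp
  next
    case (Suc i)
    have "i < j" using Suc by simp
    then have "\<not> R / 2^(Suc i) < t" unfolding j_def by (rule not_less_Least)
    then show ?thesis using Suc by simp
  qed
  show ?thesis using j1 j2 by blast
qed

lemma powr_integrable_ball:
  fixes c :: "'a::euclidean_space" and p R :: real
  assumes p: "0 < p" "p < DIM('a)" and R: "R > 0"
  shows "integrable lborel (\<lambda>x. indicator (cball c R) x * norm (x - c) powr (-p))"
proof (rule integrableI_nonneg)
  show "(\<lambda>x. indicator (cball c R) x * norm (x - c) powr (-p)) \<in> borel_measurable lborel"
    using borel_closed[OF closed_cball, of c R] by measurable
  show "AE x in lborel. 0 \<le> indicator (cball c R) x * norm (x - c) powr (-p)" by auto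
  have cb[measurable]: "cball c r \<in> sets lborel" for r by simp
  define V where "V = unit_ball_vol (DIM('a))"
  define n where "n = DIM('a)"
  define t where "t k = (R / 2^(Suc k)) powr (-p) * (V * (R / 2^k) ^ n)" for k
  have V: "V > 0" unfolding V_def by simp
  have tpos: "0 \<le> t k" for k unfolding t_def using V R by simp
  define q where "q = 2 powr (p - n)"
  have q: "0 < q" "q < 1" unfolding q_def using p powr_less_mono[of "p - n" 0 2] by (auto simp: n_def)
  have teq: "t k = (R powr (-p) * 2 powr p * V * R ^ n) * q ^ k" for k
  proof -
    note a = powr_shell_a[OF R, of k p]
    note b = powr_shell_b[OF R, of k n]
    have c: "(2 powr p) ^ k * (2 powr (- real n)) ^ k = q ^ k"
      unfolding q_def by (simp add: power_mult_distrib[symmetric] powr_add[symmetric])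
    show ?thesis unfolding t_def a b using c by (simp add: algebra_simps)
  qed
  have summ: "summable t"
    unfolding teq[abs_def] by (intro summable_mult summable_geometric) (use q in auto)
  have bound: "ennreal (indicator (cball c R) x * norm (x - c) powr (-p))
        \<le> (\<Sum>k. ennreal ((R / 2^(Suc k)) powr (-p)) * indicator (cball c (R / 2^k)) x)" for x
  proof (cases "x \<in> cball c R \<and> x \<noteq> c")
    case True
    then have "0 < norm (x - c)" "norm (x - c) \<le> R" by (auto simp: dist_norm norm_minus_commute)
    then obtain j where j: "R / 2^(Suc j) < norm (x - c)" "norm (x - c) \<le> R / 2^j"
      using exists_shell by blast
    have "ennreal (indicator (cball c R) x * norm (x - c) powr (-p)) = ennreal (norm (x - c) powr (-p))"
      using True by simp
    also have "\<dots> \<le> ennreal ((R / 2^(Suc j)) powr (-p))"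
      using j R p by (intro ennreal_leI powr_mono2') auto
    also have "\<dots> = ennreal ((R / 2^(Suc j)) powr (-p)) * indicator (cball c (R / 2^j)) x"
      using j by (simp add: dist_norm norm_minus_commute)
    also have "\<dots> = (\<Sum>k\<in>{j}. ennreal ((R / 2^(Suc k)) powr (-p)) * indicator (cball c (R / 2^k)) x)"
      by (subst sum.insert) auto
    also have "\<dots> \<le> (\<Sum>k. ennreal ((R / 2^(Suc k)) powr (-p)) * indicator (cball c (R / 2^k)) x)"
      by (rule sum_le_suminf) (simp_all add: summableI)
    finally show ?thesis .
  next
    case False
    then show ?thesis by (auto simp: indicator_def)
  qed
  have "(\<integral>\<^sup>+x. ennreal (indicator (cball c R) x * norm (x - c) powr (-p)) \<partial>lborel)
      \<le> (\<integral>\<^sup>+x. (\<Sum>k. ennreal ((R / 2^(Suc k)) powr (-p)) * indicator (cball c (R / 2^k)) x) \<partial>lborel)"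
    by (intro nn_integral_mono bound)
  also have "\<dots> = (\<Sum>k. \<integral>\<^sup>+x. ennreal ((R / 2^(Suc k)) powr (-p)) * indicator (cball c (R / 2^k)) x \<partial>lborel)"
    by (rule nn_integral_suminf) measurable
  also have "\<dots> = (\<Sum>k. ennreal (t k))"
  proof (intro suminf_cong)
    fix k
    have "(\<integral>\<^sup>+x. ennreal ((R / 2^(Suc k)) powr (-p)) * indicator (cball c (R / 2^k)) x \<partial>lborel)
        = ennreal ((R / 2^(Suc k)) powr (-p)) * emeasure lborel (cball c (R / 2^k))"
      by (rule nn_integral_cmult_indicator) auto
    also have "emeasure lborel (cball c (R / 2^k)) = ennreal (V * (R / 2^k) ^ n)"
      using R by (subst emeasure_cball) (auto simp: V_def n_def)
    also have "ennreal ((R / 2^(Suc k)) powr (-p)) * ennreal (V * (R / 2^k) ^ n) = ennreal (t k)"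
      unfolding t_def using R V by (simp add: ennreal_mult)
    finally show "(\<integral>\<^sup>+x. ennreal ((R / 2^(Suc k)) powr (-p)) * indicator (cball c (R / 2^k)) x \<partial>lborel) = ennreal (t k)" .
  qed
  also have "\<dots> < \<infinity>" using ennreal_suminf_neq_top[OF summ tpos] by (simp add: top.not_eq_extremum)
  finally show "(\<integral>\<^sup>+x. ennreal (indicator (cball c R) x * norm (x - c) powr (-p)) \<partial>lborel) < \<infinity>" .
qed

lemma lborel_shift:
  fixes g :: "'a::euclidean_space \<Rightarrow> real" and v :: 'a
  assumes g: "g \<in> borel_measurable borel"
  shows "integrable lborel (\<lambda>x. g (x + v)) \<longleftrightarrow> integrable lborel g"
    and "(\<integral>x. g (x + v) \<partial>lborel) = (\<integral>x. g x \<partial>lborel)"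
proof -
  have m: "(+) v \<in> measurable lborel borel" by simp
  have "integrable lborel g \<longleftrightarrow> integrable (distr lborel borel ((+) v)) g"
    by (simp add: lborel_distr_plus)
  also have "\<dots> \<longleftrightarrow> integrable lborel (\<lambda>x. g (v + x))"
    by (rule integrable_distr_eq[OF m g])
  finally show "integrable lborel (\<lambda>x. g (x + v)) \<longleftrightarrow> integrable lborel g" by (simp add: add.commute)
  have "(\<integral>x. g x \<partial>lborel) = (\<integral>x. g x \<partial>distr lborel borel ((+) v))"
    by (simp add: lborel_distr_plus)
  also have "\<dots> = (\<integral>x. g (v + x) \<partial>lborel)"
    by (rule integral_distr[OF m g])
  finally show "(\<integral>x. g (x + v) \<partial>lborel) = (\<integral>x. g x \<partial>lborel)" by (simp add: add.commute)
qed

lemma fub_shift: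
  fixes f :: "'a::euclidean_space \<Rightarrow> real" and w :: "real \<Rightarrow> real" and e :: 'a
  assumes f: "integrable lborel f" and w: "integrable lborel w"
  shows "integrable (lborel \<Otimes>\<^sub>M lborel) (\<lambda>(t,x). w t * f (x + t *\<^sub>R e))"
    and "(\<integral>z. (case z of (t,x) \<Rightarrow> w t * f (x + t *\<^sub>R e)) \<partial>(lborel \<Otimes>\<^sub>M lborel))
           = (\<integral>t. w t \<partial>lborel) * (\<integral>x. f x \<partial>lborel)"
proof -
  have fm[measurable]: "f \<in> borel_measurable borel" using borel_measurable_integrable[OF f] by simp
  have wm[measurable]: "w \<in> borel_measurable borel" using borel_measurable_integrable[OF w] by simp
  have meas: "(\<lambda>(t,x). w t * f (x + t *\<^sub>R e)) \<in> borel_measurable (lborel \<Otimes>\<^sub>M (lborel :: 'a measure))"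
  proof -
    have "(\<lambda>z. w (fst z) * f (snd z + fst z *\<^sub>R e)) \<in> borel_measurable (borel :: (real \<times> 'a) measure)"
      by (intro borel_measurable_times measurable_compose[OF _ wm] measurable_compose[OF _ fm]
            borel_measurable_continuous_onI continuous_intros)
    then show ?thesis unfolding lborel_prod measurable_lborel1 by (simp add: case_prod_unfold)
  qed
  have nf: "(\<lambda>x. norm (f x)) \<in> borel_measurable borel" by measurable
  have inner_int: "integrable lborel (\<lambda>x. w t * f (x + t *\<^sub>R e))" for t
    using lborel_shift(1)[OF fm, of "t *\<^sub>R e"] f by simp
  have inner_abs: "(\<integral>x. norm (w t * f (x + t *\<^sub>R e)) \<partial>lborel) = norm (w t) * (\<integral>x. norm (f x) \<partial>lborel)" for t
  proof -
    have "(\<integral>x. norm (w t * f (x + t *\<^sub>R e)) \<partial>lborel) = (\<integral>x. norm (w t) * norm (f (x + t *\<^sub>R e)) \<partial>lborel)"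
      by (simp add: abs_mult)
    also have "\<dots> = norm (w t) * (\<integral>x. norm (f (x + t *\<^sub>R e)) \<partial>lborel)" by simp
    also have "(\<integral>x. norm (f (x + t *\<^sub>R e)) \<partial>lborel) = (\<integral>x. norm (f x) \<partial>lborel)"
      using lborel_shift(2)[OF nf, of "t *\<^sub>R e"] by simp
    finally show ?thesis .
  qed

  show I: "integrable (lborel \<Otimes>\<^sub>M lborel) (\<lambda>(t,x). w t * f (x + t *\<^sub>R e))"
  proof (rule lborel_pair.Fubini_integrable[OF meas])
    show "integrable lborel (\<lambda>t. \<integral>x. norm (case (t, x) of (t, x) \<Rightarrow> w t * f (x + t *\<^sub>R e)) \<partial>lborel)"
      unfolding case_prod_conv inner_abs using w by (intro integrable_mult_left integrable_norm) auto
    show "AE t in lborel. integrable lborel (\<lambda>x. case (t, x) of (t, x) \<Rightarrow> w t * f (x + t *\<^sub>R e))"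
      using inner_int by simp
  qed
  have "(\<integral>z. (case z of (t,x) \<Rightarrow> w t * f (x + t *\<^sub>R e)) \<partial>(lborel \<Otimes>\<^sub>M lborel))
        = (\<integral>t. (\<integral>x. (case (t,x) of (t,x) \<Rightarrow> w t * f (x + t *\<^sub>R e)) \<partial>lborel) \<partial>lborel)"
    using lborel_pair.integral_fst'[OF I] by simp
  also have "\<dots> = (\<integral>t. w t * (\<integral>x. f x \<partial>lborel) \<partial>lborel)"
  proof (intro Bochner_Integration.integral_cong refl)
    fix t
    show "(\<integral>x. (case (t,x) of (t,x) \<Rightarrow> w t * f (x + t *\<^sub>R e)) \<partial>lborel) = w t * (\<integral>x. f x \<partial>lborel)"
      using lborel_shift(2)[OF fm, of "t *\<^sub>R e"] by simp
  qed
  also have "\<dots> = (\<integral>t. w t \<partial>lborel) * (\<integral>x. f x \<partial>lborel)" by simp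
  finally show "(\<integral>z. (case z of (t,x) \<Rightarrow> w t * f (x + t *\<^sub>R e)) \<partial>(lborel \<Otimes>\<^sub>M lborel))
           = (\<integral>t. w t \<partial>lborel) * (\<integral>x. f x \<partial>lborel)" .
qed

definition psi :: "real \<Rightarrow> real" where "psi t = max 0 (1 - \<bar>t\<bar>)"
definition psid :: "real \<Rightarrow> real" where
  "psid t = indicator {-1<..<0} t - indicator {0<..<1} t"

lemma psi_cont: "continuous_on S psi"
  unfolding psi_def by (intro continuous_intros)

lemma psi_zero: "t \<notin> {-1<..<1} \<Longrightarrow> psi t = 0"
  by (auto simp: psi_def)

lemma psid_zero: "t \<notin> {-1<..<1} \<Longrightarrow> psid t = 0"
  by (auto simp: psid_def)

lemma psi_bnd: "\<bar>psi t\<bar> \<le> 1" by (auto simp: psi_def)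
lemma psid_bnd: "\<bar>psid t\<bar> \<le> 1" by (auto simp: psid_def indicator_def)

lemma psi_deriv:
  assumes "t \<in> {-1<..<1} - {0}"
  shows "(psi has_real_derivative psid t) (at t)"
proof (cases "t < 0")
  case True
  have "((\<lambda>t. 1 + t) has_real_derivative 1) (at t)" by (auto intro!: derivative_eq_intros)
  then have "((\<lambda>t. 1 + t) has_real_derivative psid t) (at t)" using assms True by (simp add: psid_def)
  then show ?thesis
    by (rule has_field_derivative_transform_within_open[of _ _ _ "{-1<..<0}"])
       (use assms True in \<open>auto simp: psi_def\<close>)
next
  case False
  then have t: "0 < t" "t < 1" using assms by auto
  have "((\<lambda>t. 1 - t) has_real_derivative -1) (at t)" by (auto intro!: derivative_eq_intros)
  then have "((\<lambda>t. 1 - t) has_real_derivative psid t) (at t)" using t by (simp add: psid_def)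
  then show ?thesis
    by (rule has_field_derivative_transform_within_open[of _ _ _ "{0<..<1}"])
       (use t in \<open>auto simp: psi_def\<close>)
qed

lemma bounded_supp_integrable:
  fixes f :: "real \<Rightarrow> real"
  assumes "f \<in> borel_measurable borel" "\<And>t. \<bar>f t\<bar> \<le> 1" "\<And>t. t \<notin> {-1<..<1} \<Longrightarrow> f t = 0"
  shows "integrable lborel f"
proof -
  have I: "integrable lborel (indicator {-1..1} :: real \<Rightarrow> real)" by (intro integrable_real_indicator) auto
  have M: "f \<in> borel_measurable lborel" using assms by simp
  have A: "AE x in lborel. norm (f x) \<le> norm (indicator {-1..1} x :: real)"
    using assms by (auto simp: indicator_def)
  show ?thesis by (rule Bochner_Integration.integrable_bound[OF I M A])
qed

lemma psi_integrable: "integrable lborel psi"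
  by (intro bounded_supp_integrable psi_bnd psi_zero borel_measurable_continuous_onI psi_cont)

lemma psid_integrable: "integrable lborel psid"
  by (intro bounded_supp_integrable psid_bnd psid_zero) (unfold psid_def, measurable)

lemma lborel_from_has_integral:
  fixes f :: "real \<Rightarrow> real"
  assumes "integrable lborel f" "(f has_integral I) {-1..1}" "\<And>t. t \<notin> {-1<..<1} \<Longrightarrow> f t = 0"
  shows "(\<integral>t. f t \<partial>lborel) = I"
proof -
  have "(f has_integral I) UNIV"
    by (rule has_integral_on_superset[OF assms(2)]) (use assms(3) in auto)
  moreover have "(f has_integral (\<integral>t. f t \<partial>lborel)) UNIV" by (rule has_integral_integral_lborel[OF assms(1)])
  ultimately show ?thesis using has_integral_unique by blast
qed

lemma psid_integral: "(\<integral>t. psid t \<partial>lborel) = 0"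
proof -
  have "(psid has_integral (psi 1 - psi (-1))) {-1..1}"
    by (rule fundamental_theorem_of_calculus_interior_strong[of "{0}"])
       (use psi_deriv in \<open>auto simp: has_real_derivative_iff_has_vector_derivative[symmetric] intro: psi_cont\<close>)
  then have "(psid has_integral 0) {-1..1}" by (simp add: psi_def)
  then show ?thesis by (intro lborel_from_has_integral psid_integrable psid_zero)
qed

lemma psi_integral: "(\<integral>t. psi t \<partial>lborel) = 1"
proof -
  define Psi where "Psi t = 1/2 + t - t * \<bar>t\<bar> / 2" for t :: real
  have d: "(Psi has_real_derivative psi t) (at t)" if t: "t \<in> {-1<..<1} - {0}" for t
  proof (cases "t < 0")
    case True
    have "((\<lambda>t. 1/2 + t + t * t / 2) has_real_derivative 1 + t) (at t)" by (auto intro!: derivative_eq_intros)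
    then have "((\<lambda>t. 1/2 + t + t * t / 2) has_real_derivative psi t) (at t)" using t True by (simp add: psi_def)
    then show ?thesis
      by (rule has_field_derivative_transform_within_open[of _ _ _ "{-1<..<0}"])
         (use True t in \<open>auto simp: Psi_def\<close>)
  next
    case False
    then have tt: "0 < t" "t < 1" using t by auto
    have "((\<lambda>t. 1/2 + t - t * t / 2) has_real_derivative 1 - t) (at t)" by (auto intro!: derivative_eq_intros)
    then have "((\<lambda>t. 1/2 + t - t * t / 2) has_real_derivative psi t) (at t)" using tt by (simp add: psi_def)
    then show ?thesis
      by (rule has_field_derivative_transform_within_open[of _ _ _ "{0<..<1}"])
         (use tt in \<open>auto simp: Psi_def\<close>)
  qed
  have c: "continuous_on {-1..1} Psi" unfolding Psi_def by (intro continuous_intros) auto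
  have "(psi has_integral (Psi 1 - Psi (-1))) {-1..1}"
    by (rule fundamental_theorem_of_calculus_interior_strong[of "{0}"])
       (use d c in \<open>auto simp: has_real_derivative_iff_has_vector_derivative[symmetric]\<close>)
  then have "(psi has_integral 1) {-1..1}" by (simp add: Psi_def)
  then show ?thesis by (intro lborel_from_has_integral psi_integrable psi_zero)
qed

lemma line_negligible:
  fixes c :: "real^'n" and e :: "real^'n"
  assumes "CARD('n) \<ge> 2"
  shows "negligible {x. \<exists>t. x + t *\<^sub>R e = c}"
proof -
  have "{x. \<exists>t. x + t *\<^sub>R e = c} \<subseteq> (+) c ` span {e}"
  proof
    fix x assume "x \<in> {x. \<exists>t. x + t *\<^sub>R e = c}"
    then obtain t where t: "x + t *\<^sub>R e = c" by auto
    have "x = c + (-t) *\<^sub>R e" using t by (auto simp: algebra_simps)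
    moreover have "(-t) *\<^sub>R e \<in> span {e}" by (rule span_scale) (simp add: span_base)
    ultimately show "x \<in> (+) c ` span {e}" by blast
  qed
  moreover have "negligible ((+) c ` span {e})"
  proof (rule negligible_translation)
    have "dim (span {e}) \<le> 1" by (simp add: dim_span)
    also have "1 < DIM(real^'n)" using assms by simp
    finally show "negligible (span {e})" by (intro negligible_lowdim) auto
  qed
  ultimately show ?thesis using negligible_subset by blast
qed

lemma quad_finite: "finite {t::real. t^2 + 2 * p * t + q = 0}"
proof -
  have "{t::real. t^2 + 2 * p * t + q = 0} \<subseteq> {-p + sqrt (p^2 - q), -p - sqrt (p^2 - q)}"
  proof
    fix t :: real assume "t \<in> {t. t^2 + 2 * p * t + q = 0}"
    then have h: "(t + p)^2 = p^2 - q" by (simp add: power2_eq_square algebra_simps)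
    have "\<bar>t + p\<bar> = sqrt ((t + p)^2)" by (rule real_sqrt_abs[symmetric])
    then have "\<bar>t + p\<bar> = sqrt (p^2 - q)" using h by simp
    then have "t = -p + sqrt (p^2 - q) \<or> t = -p - sqrt (p^2 - q)" by arith
    then show "t \<in> {-p + sqrt (p^2 - q), -p - sqrt (p^2 - q)}" by blast
  qed
  then show ?thesis by (rule finite_subset) simp
qed

lemma fiber_finite:
  fixes x c e :: "real^'n"
  assumes e: "norm e = 1"
  shows "finite {t. norm (x + t *\<^sub>R e - c) = r}"
proof -
  define v where "v = x - c"
  have "{t. norm (x + t *\<^sub>R e - c) = r} \<subseteq> {t. t^2 + 2 * (v \<bullet> e) * t + (v \<bullet> v - r^2) = 0}"
  proof
    fix t assume "t \<in> {t. norm (x + t *\<^sub>R e - c) = r}"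
    then have "norm (v + t *\<^sub>R e) = r" by (simp add: v_def algebra_simps)
    then have "(norm (v + t *\<^sub>R e))^2 = r^2" by simp
    then have "(v + t *\<^sub>R e) \<bullet> (v + t *\<^sub>R e) = r^2" by (simp add: power2_norm_eq_inner)
    moreover have "e \<bullet> e = 1" using e by (metis norm_eq_sqrt_inner real_sqrt_eq_1_iff)
    ultimately show "t \<in> {t. t^2 + 2 * (v \<bullet> e) * t + (v \<bullet> v - r^2) = 0}"
      by (simp add: inner_add_left inner_add_right inner_commute power2_eq_square algebra_simps)
  qed
  then show ?thesis by (rule finite_subset) (rule quad_finite)
qed

lemma line_dist_pos:
  fixes x c e :: "real^'n"
  assumes "\<forall>t. x + t *\<^sub>R e \<noteq> c"
  shows "\<exists>\<delta>>0. \<forall>t\<in>{-1..1}. \<delta> \<le> norm (x + t *\<^sub>R e - c)"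
proof -
  have cc: "continuous_on {-1..1} (\<lambda>t. norm (x + t *\<^sub>R e - c))" by (intro continuous_intros)
  then obtain t0 where t0: "t0 \<in> {-1..1}" "\<forall>t\<in>{-1..1}. norm (x + t0 *\<^sub>R e - c) \<le> norm (x + t *\<^sub>R e - c)"
    using continuous_attains_inf[OF compact_Icc _ cc] by auto
  have "norm (x + t0 *\<^sub>R e - c) > 0" using assms by auto
  then show ?thesis using t0 by blast
qed

context
  fixes T a b \<alpha> :: real
  assumes Tpos: "T > 0" and ab: "a < b" and apos: "\<alpha> > 0"
begin

lemma pw_inv: "x > 0 \<Longrightarrow> (x powr (-1/\<alpha>)) powr (-\<alpha>) = x"
  using apos by (simp add: powr_powr)

lemma pw_inv2: "r > 0 \<Longrightarrow> (r powr (-\<alpha>)) powr (-1/\<alpha>) = r"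
  using apos by (simp add: powr_powr)

lemma step_props:
  assumes r: "r > 0"
  defines "s \<equiv> (r powr (-\<alpha>) + (b - a)) powr (-1/\<alpha>)"
  shows "0 < s" "s < r" "s powr (-\<alpha>) = r powr (-\<alpha>) + (b - a)"
proof -
  have X: "r powr (-\<alpha>) + (b - a) > r powr (-\<alpha>)" "r powr (-\<alpha>) > 0" using ab r by auto
  have X3: "r powr (-\<alpha>) + (b - a) > 0" using X by linarith
  show "0 < s" unfolding s_def powr_gt_zero using X3 by linarith
  show "s powr (-\<alpha>) = r powr (-\<alpha>) + (b - a)" unfolding s_def by (rule pw_inv[OF X3])
  have "s < (r powr (-\<alpha>)) powr (-1/\<alpha>)" unfolding s_def
    by (rule powr_less_mono2_neg) (use apos X in auto)
  then show "s < r" using pw_inv2[OF r] by simp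
qed

lemma sp_props: "r > 0 \<Longrightarrow> 0 < mesa_sp a b \<alpha> r \<and> mesa_sp a b \<alpha> r < r \<and>
   mesa_sp a b \<alpha> r powr (-\<alpha>) = r powr (-\<alpha>) + (b - a)"
  unfolding mesa_sp_def using step_props by blast

lemma sm_props: "r > 0 \<Longrightarrow> 0 < mesa_sm a b \<alpha> r \<and> mesa_sm a b \<alpha> r < mesa_sp a b \<alpha> r"
  unfolding mesa_sm_def using sp_props by auto

lemma rm_props: "r > 0 \<Longrightarrow> 0 < mesa_rm a b \<alpha> r \<and> mesa_rm a b \<alpha> r < mesa_sm a b \<alpha> r \<and>
   mesa_rm a b \<alpha> r powr (-\<alpha>) = mesa_sm a b \<alpha> r powr (-\<alpha>) + (b - a)"
  unfolding mesa_rm_def using step_props sm_props by blast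

abbreviation "rp \<equiv> mesa_rp T a b \<alpha>"

lemma rp_pos: "rp k > 0"
  by (induction k) (use Tpos rm_props in auto)

lemma rp_Suc_less: "rp (Suc k) < mesa_rm a b \<alpha> (rp k)"
  using rm_props[OF rp_pos[of k]] by simp

lemma rp_dec: "rp (Suc k) < rp k"
  using rm_props[OF rp_pos[of k]] sm_props[OF rp_pos[of k]] sp_props[OF rp_pos[of k]] by simp

lemma rp_le_mono: "j \<le> k \<Longrightarrow> rp k \<le> rp j"
  by (rule lift_Suc_antimono_le[of rp]) (use rp_dec less_imp_le in auto)

lemma rp_less_mono: "j < k \<Longrightarrow> rp k < rp j"
  using lift_Suc_mono_less[of "\<lambda>n. - rp n" j k] rp_dec by force

lemma rp_half: "rp k \<le> (T/2) / 2^k"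
proof (induction k)
  case (Suc k)
  have "rp (Suc k) < rp k / 2"
    using rm_props[OF rp_pos[of k]] sm_props[OF rp_pos[of k]] sp_props[OF rp_pos[of k]] by simp
  moreover have "rp k / 2 \<le> (T/2/2^k) / 2" using Suc.IH by (intro divide_right_mono) auto
  ultimately have "rp (Suc k) < (T/2/2^k) / 2" by linarith
  then show ?case by (simp add: field_simps)
qed simp

lemma rp_small: "\<delta> > 0 \<Longrightarrow> \<exists>N. rp N < \<delta>"
proof -
  assume d: "\<delta> > 0"
  obtain N where "(1/2::real)^N < \<delta> / T" using real_arch_pow_inv[of "\<delta>/T" "1/2"] d Tpos by auto
  then have "T / 2^N < \<delta>" using Tpos by (simp add: field_simps power_divide)
  moreover have "rp N \<le> T/2/2^N" by (rule rp_half)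
  moreover have "T/2/2^N \<le> T/2^N" using Tpos by (simp add: field_simps)
  ultimately show ?thesis by (intro exI[of _ N]) linarith
qed

lemma block_unique:
  assumes "rp (Suc k) \<le> \<rho>" "\<rho> < rp k" "rp (Suc j) \<le> \<rho>" "\<rho> < rp j"
  shows "j = k"
proof (rule ccontr)
  assume "j \<noteq> k"
  then consider "j < k" | "k < j" by linarith
  then show False
  proof cases
    case 1 then have "Suc j \<le> k" by simp
    then have "rp k \<le> rp (Suc j)" by (rule rp_le_mono)
    then show False using assms by linarith
  next
    case 2 then have "Suc k \<le> j" by simp
    then have "rp j \<le> rp (Suc k)" by (rule rp_le_mono)
    then show False using assms by linarith
  qed
qed

lemma block_exists:
  assumes "0 < \<rho>" "\<rho> < T/2"
  shows "\<exists>k. rp (Suc k) \<le> \<rho> \<and> \<rho> < rp k"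
proof -
  obtain N where N: "rp N < \<rho>" using rp_small assms by blast
  define m where "m = (LEAST m. rp m \<le> \<rho>)"
  have m1: "rp m \<le> \<rho>" unfolding m_def by (rule LeastI[of _ N]) (use N in simp)
  have m0: "m \<noteq> 0" proof assume "m = 0" then show False using m1 assms by simp qed
  then obtain k where k: "m = Suc k" using not0_implies_Suc by blast
  have "k < m" using k by simp
  then have "\<not> rp k \<le> \<rho>" unfolding m_def by (rule not_less_Least)
  then show ?thesis using m1 k by auto
qed

definition blk :: "real \<Rightarrow> nat" where
  "blk \<rho> = (SOME k. rp (Suc k) \<le> \<rho> \<and> \<rho> < rp k)"

lemma blk_eq:
  assumes "rp (Suc k) \<le> \<rho>" "\<rho> < rp k"
  shows "blk \<rho> = k"
proof -
  have "rp (Suc (blk \<rho>)) \<le> \<rho> \<and> \<rho> < rp (blk \<rho>)"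
    unfolding blk_def by (rule someI[of _ k]) (use assms in auto)
  then show ?thesis using block_unique assms by blast
qed

end

context
  fixes T a b \<alpha> :: real
  assumes Tpos: "T > 0" and ab: "a < b" and apos: "\<alpha> > 0"
begin

abbreviation "rp' \<equiv> mesa_rp T a b \<alpha>"
abbreviation "blk' \<equiv> blk T a b \<alpha>"
abbreviation "P \<equiv> mesa_profile T a b \<alpha>"

definition F :: "real \<Rightarrow> real \<Rightarrow> real" where
  "F r \<rho> = (if mesa_sp a b \<alpha> r \<le> \<rho> then \<rho> powr (-\<alpha>) - r powr (-\<alpha>) + a
           else if mesa_sm a b \<alpha> r \<le> \<rho> then b
           else if mesa_rm a b \<alpha> r \<le> \<rho> then b - (\<rho> powr (-\<alpha>) - mesa_sm a b \<alpha> r powr (-\<alpha>))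
           else a)"

definition clamp :: "real \<Rightarrow> real" where "clamp y = min (b - a) (max 0 y)"

definition G :: "real \<Rightarrow> real \<Rightarrow> real" where
  "G r \<rho> = a + clamp (\<rho> powr (-\<alpha>) - r powr (-\<alpha>)) - clamp (\<rho> powr (-\<alpha>) - mesa_sm a b \<alpha> r powr (-\<alpha>))"

lemma P_lt: "\<rho> < T/2 \<Longrightarrow> P \<rho> = F (rp' (blk' \<rho>)) \<rho>"
  unfolding mesa_profile_def Let_def blk_def[OF Tpos ab apos] F_def using Tpos by (simp del: mesa_rp.simps)

lemma P_mid: "T/2 \<le> \<rho> \<Longrightarrow> \<rho> \<le> T \<Longrightarrow> P \<rho> = - (2 * a / T) * \<rho> + 2 * a"
  using Tpos by (auto simp: mesa_profile_def)

lemma P_big: "T \<le> \<rho> \<Longrightarrow> P \<rho> = 0"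
  by (simp add: mesa_profile_def)

lemma radii:
  assumes "r > 0"
  shows "0 < mesa_rm a b \<alpha> r" "mesa_rm a b \<alpha> r < mesa_sm a b \<alpha> r"
    "mesa_sm a b \<alpha> r < mesa_sp a b \<alpha> r" "mesa_sp a b \<alpha> r < r"
    "mesa_sp a b \<alpha> r powr (-\<alpha>) = r powr (-\<alpha>) + (b - a)"
    "mesa_rm a b \<alpha> r powr (-\<alpha>) = mesa_sm a b \<alpha> r powr (-\<alpha>) + (b - a)"
  using sp_props[OF Tpos ab apos assms] sm_props[OF Tpos ab apos assms] rm_props[OF Tpos ab apos assms]
  by auto

lemma rpk: "0 < rp' k" "rp' (Suc k) < mesa_rm a b \<alpha> (rp' k)" "rp' k \<le> T/2"
  using rp_pos[OF Tpos ab apos] rp_Suc_less[OF Tpos ab apos] rp_le_mono[OF Tpos ab apos, of 0 k]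
  by auto

lemma F_rp: "F (rp' k) (rp' k) = a"
  using radii[OF rpk(1)[of k]] by (simp add: F_def)

lemma F_low: "\<rho> < mesa_rm a b \<alpha> (rp' k) \<Longrightarrow> F (rp' k) \<rho> = a"
  using radii[OF rpk(1)[of k]] by (simp add: F_def)

lemma P_block_open: "rp' (Suc k) \<le> \<rho> \<Longrightarrow> \<rho> < rp' k \<Longrightarrow> P \<rho> = F (rp' k) \<rho>"
  using P_lt blk_eq[OF Tpos ab apos] rpk(3)[of k] by fastforce

lemma P_block: "rp' (Suc k) \<le> \<rho> \<Longrightarrow> \<rho> \<le> rp' k \<Longrightarrow> P \<rho> = F (rp' k) \<rho>"
proof (cases "\<rho> = rp' k")
  case True
  show ?thesis
  proof (cases k)
    case 0
    have r: "\<rho> = T/2" using True 0 by simp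
    have "P \<rho> = - (2 * a / T) * (T/2) + 2 * a" unfolding r using P_mid[of "T/2"] Tpos by simp
    also have "\<dots> = a" using Tpos by (simp add: field_simps)
    finally show ?thesis using F_rp[of 0] 0 unfolding r by simp
  next
    case (Suc j)
    have "P \<rho> = F (rp' j) \<rho>" using True Suc rp_dec[OF Tpos ab apos, of j] by (intro P_block_open) auto
    also have "\<dots> = a" using True Suc rpk(2)[of j] by (intro F_low) auto
    finally show ?thesis using True F_rp by simp
  qed
qed (use P_block_open in auto)

lemma clamp_id: "0 \<le> y \<Longrightarrow> y \<le> b - a \<Longrightarrow> clamp y = y"
  by (simp add: clamp_def)
lemma clamp_0: "y \<le> 0 \<Longrightarrow> clamp y = 0"
  using ab by (simp add: clamp_def)
lemma clamp_d: "b - a \<le> y \<Longrightarrow> clamp y = b - a"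
  using ab by (simp add: clamp_def)

lemma powr_anti: "0 < x \<Longrightarrow> x \<le> y \<Longrightarrow> y powr (-\<alpha>) \<le> x powr (-\<alpha>)"
  using apos by (intro powr_mono2') auto
lemma powr_anti_strict: "0 < x \<Longrightarrow> x < y \<Longrightarrow> y powr (-\<alpha>) < x powr (-\<alpha>)"
  using apos by (intro powr_less_mono2_neg) auto

lemma F_eq_G:
  assumes r: "r > 0" and "0 < \<rho>" "\<rho> \<le> r"
  shows "F r \<rho> = G r \<rho>"
proof -
  note R = radii[OF r]
  define sp where "sp = mesa_sp a b \<alpha> r"
  define sm where "sm = mesa_sm a b \<alpha> r"
  define rm where "rm = mesa_rm a b \<alpha> r"
  note R = R[folded sp_def sm_def rm_def]
  consider "sp \<le> \<rho>" | "sm \<le> \<rho>" "\<rho> < sp" | "rm \<le> \<rho>" "\<rho> < sm" | "\<rho> < rm" by linarith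
  then show ?thesis
  proof cases
    case 1
    have c1: "clamp (\<rho> powr (-\<alpha>) - r powr (-\<alpha>)) = \<rho> powr (-\<alpha>) - r powr (-\<alpha>)"
      using powr_anti[of \<rho> r] powr_anti[of sp \<rho>] R 1 assms by (intro clamp_id) auto
    have c2: "clamp (\<rho> powr (-\<alpha>) - sm powr (-\<alpha>)) = 0"
      using powr_anti[of sm \<rho>] R 1 assms by (intro clamp_0) auto
    show ?thesis using 1 c1 c2 unfolding F_def G_def sp_def sm_def by simp
  next
    case 2
    have c1: "clamp (\<rho> powr (-\<alpha>) - r powr (-\<alpha>)) = b - a"
      using powr_anti_strict[of \<rho> sp] R 2 assms by (intro clamp_d) auto
    have c2: "clamp (\<rho> powr (-\<alpha>) - sm powr (-\<alpha>)) = 0"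
      using powr_anti[of sm \<rho>] R 2 assms by (intro clamp_0) auto
    show ?thesis using 2 c1 c2 unfolding F_def G_def sp_def sm_def by simp
  next
    case 3
    have c1: "clamp (\<rho> powr (-\<alpha>) - r powr (-\<alpha>)) = b - a"
      using powr_anti_strict[of \<rho> sp] R 3 assms by (intro clamp_d) auto
    have c2: "clamp (\<rho> powr (-\<alpha>) - sm powr (-\<alpha>)) = \<rho> powr (-\<alpha>) - sm powr (-\<alpha>)"
      using powr_anti[of \<rho> sm] powr_anti[of rm \<rho>] R 3 assms by (intro clamp_id) auto
    show ?thesis using 3 c1 c2 R unfolding F_def G_def sp_def sm_def rm_def by auto
  next
    case 4
    have c1: "clamp (\<rho> powr (-\<alpha>) - r powr (-\<alpha>)) = b - a"
      using powr_anti_strict[of \<rho> sp] R 4 assms by (intro clamp_d) auto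
    have c2: "clamp (\<rho> powr (-\<alpha>) - sm powr (-\<alpha>)) = b - a"
      using powr_anti_strict[of \<rho> rm] R 4 assms by (intro clamp_d) auto
    show ?thesis using 4 c1 c2 R unfolding F_def G_def sp_def sm_def rm_def by auto
  qed
qed

lemma G_cont: "continuous_on {0<..} (G r)"
  unfolding G_def clamp_def by (intro continuous_intros) auto

lemma P_cont_from: "continuous_on {rp' N..} P"
proof (induction N)
  case 0
  have e: "{rp' 0..} = {T/2..T} \<union> {T..}" using Tpos by auto
  have "continuous_on {T/2..T} P"
    by (rule continuous_on_eq[of _ "\<lambda>\<rho>. - (2 * a / T) * \<rho> + 2 * a"]) (use Tpos in \<open>auto intro!: continuous_intros simp: P_mid\<close>)
  moreover have "continuous_on {T..} P"
    by (rule continuous_on_eq[of _ "\<lambda>_. 0"]) (auto simp: P_big)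
  ultimately show ?case unfolding e by (intro continuous_on_closed_Un) auto
next
  case (Suc N)
  have e: "{rp' (Suc N)..} = {rp' (Suc N)..rp' N} \<union> {rp' N..}"
    using rp_dec[OF Tpos ab apos, of N] by auto
  have "continuous_on {rp' (Suc N)..rp' N} P"
  proof (rule continuous_on_eq[of _ "G (rp' N)"])
    show "continuous_on {rp' (Suc N)..rp' N} (G (rp' N))"
      by (rule continuous_on_subset[OF G_cont]) (use rpk(1)[of "Suc N"] in auto)
    fix x assume "x \<in> {rp' (Suc N)..rp' N}"
    then show "G (rp' N) x = P x" using P_block[of N x] F_eq_G[of "rp' N" x] rpk(1)[of "Suc N"] rpk(1)[of N]
      by auto
  qed
  then show ?case unfolding e using Suc by (intro continuous_on_closed_Un) auto
qed

lemma P_isCont: "\<rho> > 0 \<Longrightarrow> isCont P \<rho>"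
proof -
  assume "\<rho> > 0"
  then obtain N where N: "rp' N < \<rho>" using rp_small[OF Tpos ab apos] by blast
  show ?thesis
    by (rule continuous_on_interior[OF P_cont_from[of N]]) (use N in auto)
qed

lemma clamp_bnd: "0 \<le> clamp y" "clamp y \<le> b - a"
  using ab by (auto simp: clamp_def)

lemma P_bound: "\<rho> > 0 \<Longrightarrow> \<bar>P \<rho>\<bar> \<le> 2 * \<bar>a\<bar> + \<bar>b\<bar>"
proof -
  assume r: "\<rho> > 0"
  consider "T \<le> \<rho>" | "T/2 \<le> \<rho>" "\<rho> \<le> T" | "\<rho> < T/2" by linarith
  then show ?thesis
  proof cases
    case 1 then show ?thesis by (simp add: P_big)
  next
    case 2
    have "\<bar>- (2 * a / T) * \<rho> + 2 * a\<bar> = \<bar>2 * a\<bar> * \<bar>1 - \<rho> / T\<bar>" using Tpos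
      by (simp add: field_simps abs_mult[symmetric])
    also have "\<dots> \<le> \<bar>2*a\<bar> * 1" using 2 Tpos by (intro mult_left_mono) (auto simp: field_simps)
    finally show ?thesis using 2 by (simp add: P_mid)
  next
    case 3
    obtain k where k: "rp' (Suc k) \<le> \<rho>" "\<rho> < rp' k" using block_exists[OF Tpos ab apos r 3] by blast
    have "P \<rho> = G (rp' k) \<rho>" using P_block_open[OF k] F_eq_G[of "rp' k" \<rho>] k r rpk(1)[of k] by auto
    then show ?thesis unfolding G_def using clamp_bnd ab by (smt (verit))
  qed
qed

end

definition Dp :: "real \<Rightarrow> real \<Rightarrow> real \<Rightarrow> real \<Rightarrow> real \<Rightarrow> real" where
 "Dp T a b \<alpha> \<rho> = (if T < \<rho> then 0 else if T/2 < \<rho> then -(2*a/T) else if \<rho> \<le> 0 then 0 else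
   (let r = mesa_rp T a b \<alpha> (blk T a b \<alpha> \<rho>) in
    if mesa_sp a b \<alpha> r < \<rho> then -\<alpha> * \<rho> powr (-\<alpha>-1)
    else if mesa_sm a b \<alpha> r < \<rho> then 0
    else if mesa_rm a b \<alpha> r < \<rho> then \<alpha> * \<rho> powr (-\<alpha>-1) else 0))"

definition Bset :: "real \<Rightarrow> real \<Rightarrow> real \<Rightarrow> real \<Rightarrow> real set" where
 "Bset T a b \<alpha> = {T, T/2} \<union> range (mesa_rp T a b \<alpha>) \<union> range (\<lambda>k. mesa_sp a b \<alpha> (mesa_rp T a b \<alpha> k))
    \<union> range (\<lambda>k. mesa_sm a b \<alpha> (mesa_rp T a b \<alpha> k)) \<union> range (\<lambda>k. mesa_rm a b \<alpha> (mesa_rp T a b \<alpha> k))"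

lemma Bset_countable: "countable (Bset T a b \<alpha>)"
  unfolding Bset_def by auto

context
  fixes T a b \<alpha> :: real
  assumes Tpos: "T > 0" and ab: "a < b" and apos: "\<alpha> > 0"
begin

abbreviation "D \<equiv> Dp T a b \<alpha>"
abbreviation "PP \<equiv> mesa_profile T a b \<alpha>"

lemma piece:
  assumes "l < \<rho>" "\<rho> < u"
    and eq: "\<And>y. y \<in> {l<..<u} \<Longrightarrow> PP y = f y \<and> D y = f' y"
    and der: "\<And>y. y \<in> {l<..<u} \<Longrightarrow> (f has_real_derivative f' y) (at y)"
    and cont: "continuous_on {l<..<u} f'"
  shows "(PP has_real_derivative D \<rho>) (at \<rho>) \<and> isCont D \<rho>"
proof
  have r: "\<rho> \<in> {l<..<u}" using assms by auto
  have "(f has_real_derivative D \<rho>) (at \<rho>)" using der[OF r] eq[OF r] by simp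
  then show "(PP has_real_derivative D \<rho>) (at \<rho>)"
    by (rule has_field_derivative_transform_within_open[of _ _ _ "{l<..<u}"]) (use r eq in auto)
  have "continuous_on {l<..<u} D" by (rule continuous_on_eq[OF cont]) (use eq in auto)
  then show "isCont D \<rho>" by (rule continuous_on_interior) (use r in auto)
qed

lemma D_lt:
  assumes "0 < y" "y < T/2" "mesa_rp T a b \<alpha> (Suc k) \<le> y" "y < mesa_rp T a b \<alpha> k"
  shows "D y = (if mesa_sp a b \<alpha> (mesa_rp T a b \<alpha> k) < y then -\<alpha> * y powr (-\<alpha>-1)
    else if mesa_sm a b \<alpha> (mesa_rp T a b \<alpha> k) < y then 0
    else if mesa_rm a b \<alpha> (mesa_rp T a b \<alpha> k) < y then \<alpha> * y powr (-\<alpha>-1) else 0)"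
  using assms blk_eq[OF Tpos ab apos assms(3,4)] Tpos by (simp add: Dp_def Let_def)

lemma der_pow: "y > 0 \<Longrightarrow> ((\<lambda>y. y powr (-\<alpha>)) has_real_derivative (-\<alpha> * y powr (-\<alpha>-1))) (at y)"
  using has_real_derivative_powr[of y "-\<alpha>"] by simp

lemma cont_pow: "continuous_on {l<..<u} (\<lambda>y. c * y powr (-\<alpha>-1))" if "l \<ge> 0"
  using that by (intro continuous_intros) auto

lemma D_diff:
  assumes r: "\<rho> > 0" "\<rho> \<notin> Bset T a b \<alpha>"
  shows "(PP has_real_derivative D \<rho>) (at \<rho>) \<and> isCont D \<rho>"
proof -
  have nB: "\<rho> \<noteq> T" "\<rho> \<noteq> T/2" "\<And>k. \<rho> \<noteq> mesa_rp T a b \<alpha> k" "\<And>k. \<rho> \<noteq> mesa_sp a b \<alpha> (mesa_rp T a b \<alpha> k)"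
     "\<And>k. \<rho> \<noteq> mesa_sm a b \<alpha> (mesa_rp T a b \<alpha> k)" "\<And>k. \<rho> \<noteq> mesa_rm a b \<alpha> (mesa_rp T a b \<alpha> k)"
    using r(2) unfolding Bset_def by auto
  consider "T < \<rho>" | "T/2 < \<rho>" "\<rho> < T" | "\<rho> < T/2" using nB by linarith
  then show ?thesis
  proof cases
    case 1
    show ?thesis
      by (rule piece[of T \<rho> "\<rho>+1" "\<lambda>_. 0" "\<lambda>_. 0"]) (use 1 in \<open>auto simp: P_big[OF Tpos ab apos] Dp_def\<close>)
  next
    case 2
    show ?thesis
      by (rule piece[of "T/2" \<rho> T "\<lambda>y. - (2 * a / T) * y + 2 * a" "\<lambda>_. - (2 * a / T)"])
        (use 2 Tpos in \<open>auto simp: P_mid[OF Tpos ab apos] Dp_def intro!: derivative_eq_intros\<close>)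
  next
    case 3
    obtain k where k: "mesa_rp T a b \<alpha> (Suc k) \<le> \<rho>" "\<rho> < mesa_rp T a b \<alpha> k" using block_exists[OF Tpos ab apos r(1) 3] by blast
    have k1: "mesa_rp T a b \<alpha> (Suc k) < \<rho>" using k nB(3)[of "Suc k"] by auto
    note R = radii[OF Tpos ab apos rpk(1)[OF Tpos ab apos, of k]]
    note rk = rpk[OF Tpos ab apos, of k]
    define sp where "sp = mesa_sp a b \<alpha> (mesa_rp T a b \<alpha> k)"
    define sm where "sm = mesa_sm a b \<alpha> (mesa_rp T a b \<alpha> k)"
    define rm where "rm = mesa_rm a b \<alpha> (mesa_rp T a b \<alpha> k)"
    note R = R[folded sp_def sm_def rm_def]
    have base: "0 < mesa_rp T a b \<alpha> (Suc k)" "mesa_rp T a b \<alpha> (Suc k) < rm" "mesa_rp T a b \<alpha> k \<le> T/2"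
      using rk rpk(1)[OF Tpos ab apos, of "Suc k"] unfolding rm_def by auto
    consider "sp < \<rho>" | "sm < \<rho>" "\<rho> < sp" | "rm < \<rho>" "\<rho> < sm" | "\<rho> < rm"
      using nB(4,5,6)[of k] unfolding sp_def sm_def rm_def by linarith
    then show ?thesis
    proof cases
      case 1
      show ?thesis
      proof (rule piece[of sp \<rho> "mesa_rp T a b \<alpha> k" "\<lambda>y. y powr (-\<alpha>) - mesa_rp T a b \<alpha> k powr (-\<alpha>) + a" "\<lambda>y. -\<alpha> * y powr (-\<alpha>-1)"])
        fix y assume y: "y \<in> {sp<..<mesa_rp T a b \<alpha> k}"
        then have yy: "0 < y \<and> y < T/2 \<and> mesa_rp T a b \<alpha> (Suc k) \<le> y \<and> y < mesa_rp T a b \<alpha> k" using y R base unfolding greaterThanLessThan_iff by linarith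
        show "PP y = y powr (-\<alpha>) - mesa_rp T a b \<alpha> k powr (-\<alpha>) + a \<and> D y = -\<alpha> * y powr (-\<alpha>-1)"
          using P_block_open[OF Tpos ab apos, of k y] D_lt[of y k] yy y
          unfolding F_def[OF Tpos ab apos] sp_def by auto
        show "((\<lambda>y. y powr (-\<alpha>) - mesa_rp T a b \<alpha> k powr (-\<alpha>) + a) has_real_derivative -\<alpha> * y powr (-\<alpha>-1)) (at y)"
          using der_pow[of y] yy by (auto intro!: derivative_eq_intros)
      next
        show "continuous_on {sp<..<mesa_rp T a b \<alpha> k} (\<lambda>y. -\<alpha> * y powr (-\<alpha>-1))" using R by (intro cont_pow) auto
      qed (use 1 k in auto)
    next
      case 2
      show ?thesis
      proof (rule piece[of sm \<rho> sp "\<lambda>y. b" "\<lambda>y. 0"])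
        fix y assume y: "y \<in> {sm<..<sp}"
        then have yy: "0 < y \<and> y < T/2 \<and> mesa_rp T a b \<alpha> (Suc k) \<le> y \<and> y < mesa_rp T a b \<alpha> k" using y R base unfolding greaterThanLessThan_iff by linarith
        show "PP y = b \<and> D y = 0"
          using P_block_open[OF Tpos ab apos, of k y] D_lt[of y k] yy y
          unfolding F_def[OF Tpos ab apos] sp_def sm_def by auto
      qed (use 2 in auto)
    next
      case 3
      show ?thesis
      proof (rule piece[of rm \<rho> sm "\<lambda>y. b - (y powr (-\<alpha>) - sm powr (-\<alpha>))" "\<lambda>y. \<alpha> * y powr (-\<alpha>-1)"])
        fix y assume y: "y \<in> {rm<..<sm}"
        then have yy: "0 < y \<and> y < T/2 \<and> mesa_rp T a b \<alpha> (Suc k) \<le> y \<and> y < mesa_rp T a b \<alpha> k" using y R base unfolding greaterThanLessThan_iff by linarith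
        show "PP y = b - (y powr (-\<alpha>) - sm powr (-\<alpha>)) \<and> D y = \<alpha> * y powr (-\<alpha>-1)"
          using P_block_open[OF Tpos ab apos, of k y] D_lt[of y k] yy y R
          unfolding F_def[OF Tpos ab apos] sp_def sm_def rm_def by auto
        show "((\<lambda>y. b - (y powr (-\<alpha>) - sm powr (-\<alpha>))) has_real_derivative \<alpha> * y powr (-\<alpha>-1)) (at y)"
          using der_pow[of y] yy by (auto intro!: derivative_eq_intros)
      next
        show "continuous_on {rm<..<sm} (\<lambda>y. \<alpha> * y powr (-\<alpha>-1))" using R by (intro cont_pow) auto
      qed (use 3 in auto)
    next
      case 4
      show ?thesis
      proof (rule piece[of "mesa_rp T a b \<alpha> (Suc k)" \<rho> rm "\<lambda>y. a" "\<lambda>y. 0"])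
        fix y assume y: "y \<in> {mesa_rp T a b \<alpha> (Suc k)<..<rm}"
        then have yy: "0 < y \<and> y < T/2 \<and> mesa_rp T a b \<alpha> (Suc k) \<le> y \<and> y < mesa_rp T a b \<alpha> k" using y R base unfolding greaterThanLessThan_iff by linarith
        show "PP y = a \<and> D y = 0"
          using P_block_open[OF Tpos ab apos, of k y] D_lt[of y k] yy y R
          unfolding F_def[OF Tpos ab apos] sp_def sm_def rm_def by auto
      qed (use 4 k1 in auto)
    qed
  qed
qed

lemma D_cont_neg: "\<rho> < 0 \<Longrightarrow> isCont D \<rho>"
proof -
  assume r: "\<rho> < 0"
  have "continuous_on {\<rho>-1<..<0} D"
    by (rule continuous_on_eq[of _ "\<lambda>_. 0"]) (use Tpos in \<open>auto simp: Dp_def\<close>)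
  then show ?thesis by (rule continuous_on_interior) (use r in auto)
qed

lemma D_borel: "D \<in> borel_measurable borel"
proof (rule borel_measurable_continuous_countable_exceptions[of "insert 0 (Bset T a b \<alpha>)"])
  show "countable (insert 0 (Bset T a b \<alpha>))" using Bset_countable by simp
  show "continuous_on (- insert 0 (Bset T a b \<alpha>)) D"
  proof (intro continuous_at_imp_continuous_on ballI)
    fix x assume x: "x \<in> - insert 0 (Bset T a b \<alpha>)"
    show "isCont D x"
    proof (cases "x < 0")
      case True then show ?thesis by (rule D_cont_neg)
    next
      case False then have "x > 0" using x by auto
      then show ?thesis using D_diff[of x] x by auto
    qed
  qed
qed

lemma D_bound: "\<rho> > 0 \<Longrightarrow> \<bar>D \<rho>\<bar> \<le> \<alpha> * \<rho> powr (-\<alpha>-1) + 2 * \<bar>a\<bar> / T"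
proof -
  assume r: "\<rho> > 0"
  have p: "0 \<le> \<alpha> * \<rho> powr (-\<alpha>-1)" using apos by simp
  have q: "0 \<le> 2 * \<bar>a\<bar> / T" using Tpos by simp
  have "\<bar>-(2*a/T)\<bar> = 2 * \<bar>a\<bar> / T" using Tpos by (simp add: abs_mult)
  then show ?thesis using p q r apos unfolding Dp_def Let_def by (auto simp: abs_mult)
qed

lemma D_big: "T < \<rho> \<Longrightarrow> D \<rho> = 0"
  by (simp add: Dp_def)

end

lemma Bset_fin:
  assumes Tpos: "T > 0" and ab: "a < b" and apos: "\<alpha> > 0" and d: "\<delta> > 0"
  shows "finite (Bset T a b \<alpha> \<inter> {\<delta>..})"
proof -
  obtain N where N: "mesa_rp T a b \<alpha> N < \<delta>" using rp_small[OF Tpos ab apos d] by blast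
  let ?r = "mesa_rp T a b \<alpha>"
  have sub: "Bset T a b \<alpha> \<inter> {\<delta>..} \<subseteq> {T, T/2} \<union> ?r ` {..<N} \<union> (\<lambda>k. mesa_sp a b \<alpha> (?r k)) ` {..<N}
      \<union> (\<lambda>k. mesa_sm a b \<alpha> (?r k)) ` {..<N} \<union> (\<lambda>k. mesa_rm a b \<alpha> (?r k)) ` {..<N}"
  proof
    fix y assume y: "y \<in> Bset T a b \<alpha> \<inter> {\<delta>..}"
    have big: "k < N" if "y \<le> ?r k" for k
    proof (rule ccontr)
      assume "\<not> k < N"
      then have "?r k \<le> ?r N" using rp_le_mono[OF Tpos ab apos] by simp
      then show False using that y N by auto
    qed
    note R = radii[OF Tpos ab apos rpk(1)[OF Tpos ab apos]]
    show "y \<in> {T, T/2} \<union> ?r ` {..<N} \<union> (\<lambda>k. mesa_sp a b \<alpha> (?r k)) ` {..<N}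
      \<union> (\<lambda>k. mesa_sm a b \<alpha> (?r k)) ` {..<N} \<union> (\<lambda>k. mesa_rm a b \<alpha> (?r k)) ` {..<N}"
      using y unfolding Bset_def
    proof (elim IntE UnE)
      assume "y \<in> range ?r" then obtain k where "y = ?r k" by auto
      then show ?thesis using big[of k] by auto
    next
      assume "y \<in> range (\<lambda>k. mesa_sp a b \<alpha> (?r k))" then obtain k where k: "y = mesa_sp a b \<alpha> (?r k)" by auto
      then have "y \<le> ?r k" using R[of k] by simp
      then show ?thesis using big[of k] k by auto
    next
      assume "y \<in> range (\<lambda>k. mesa_sm a b \<alpha> (?r k))" then obtain k where k: "y = mesa_sm a b \<alpha> (?r k)" by auto
      then have "y \<le> ?r k" using R[of k] by simp
      then show ?thesis using big[of k] k by auto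
    next
      assume "y \<in> range (\<lambda>k. mesa_rm a b \<alpha> (?r k))" then obtain k where k: "y = mesa_rm a b \<alpha> (?r k)" by auto
      then have "y \<le> ?r k" using R[of k] by simp
      then show ?thesis using big[of k] k by auto
    qed auto
  qed
  show ?thesis by (rule finite_subset[OF sub]) auto
qed

definition gf :: "real^'n \<Rightarrow> real \<Rightarrow> real \<Rightarrow> real \<Rightarrow> real \<Rightarrow> real^'n \<Rightarrow> real^'n \<Rightarrow> real" where
  "gf c T a b \<alpha> e x = (if x = c then 0 else Dp T a b \<alpha> (norm (x - c)) * ((x - c) \<bullet> e) / norm (x - c))"

lemma norm_line_deriv:
  fixes x c e :: "real^'n"
  assumes "x + t *\<^sub>R e \<noteq> c"
  shows "((\<lambda>t. norm (x + t *\<^sub>R e - c)) has_real_derivative ((x + t *\<^sub>R e - c) \<bullet> e) / norm (x + t *\<^sub>R e - c)) (at t)"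
proof -
  define y where "y = x + t *\<^sub>R e - c"
  have y0: "y \<noteq> 0" using assms by (simp add: y_def)
  have l: "((\<lambda>t. x + t *\<^sub>R e - c) has_derivative (\<lambda>s. s *\<^sub>R e)) (at t)"
    by (auto intro!: derivative_eq_intros)
  have n: "(norm has_derivative (\<lambda>h. h \<bullet> sgn y)) (at y)"
    using has_derivative_norm[OF y0] by (simp add: inner_commute)
  have "((\<lambda>t. norm (x + t *\<^sub>R e - c)) has_derivative (\<lambda>s. (s *\<^sub>R e) \<bullet> sgn y)) (at t)"
    using has_derivative_compose[OF l n[unfolded y_def]] unfolding y_def by simp
  moreover have "(\<lambda>s. (s *\<^sub>R e) \<bullet> sgn y) = (*) ((y \<bullet> e) / norm y)"
    by (rule ext) (simp add: sgn_div_norm inner_commute divide_inverse)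
  ultimately have "((\<lambda>t. norm (x + t *\<^sub>R e - c)) has_derivative (*) ((y \<bullet> e) / norm y)) (at t)"
    by simp
  then show ?thesis unfolding has_field_derivative_def y_def .
qed

lemma phi_line_deriv:
  fixes \<phi> :: "real^'n \<Rightarrow> real"
  assumes "\<phi> differentiable (at (x + t *\<^sub>R e))"
  shows "((\<lambda>t. \<phi> (x + t *\<^sub>R e)) has_real_derivative frechet_derivative \<phi> (at (x + t *\<^sub>R e)) e) (at t)"
proof -
  let ?D = "frechet_derivative \<phi> (at (x + t *\<^sub>R e))"
  have d: "(\<phi> has_derivative ?D) (at (x + t *\<^sub>R e))" using assms frechet_derivative_works by blast
  have l: "((\<lambda>t. x + t *\<^sub>R e) has_derivative (\<lambda>s. s *\<^sub>R e)) (at t)"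
    by (auto intro!: derivative_eq_intros)
  have "((\<lambda>t. \<phi> (x + t *\<^sub>R e)) has_derivative (\<lambda>s. ?D (s *\<^sub>R e))) (at t)"
    using has_derivative_compose[OF l d] by simp
  moreover have "(\<lambda>s. ?D (s *\<^sub>R e)) = (\<lambda>s. ?D e * s)"
    using has_derivative_linear[OF d] by (auto simp: linear_cmul mult.commute)
  ultimately show ?thesis unfolding has_field_derivative_def by simp
qed

lemma line_ibp:
  fixes c x e :: "real^'n" and \<phi> h :: "real^'n \<Rightarrow> real"
  assumes Tpos: "T > 0" and ab: "a < b" and apos: "\<alpha> > 0"
    and e: "norm e = 1" and xL: "\<forall>t. x + t *\<^sub>R e \<noteq> c"
    and phic: "continuous_on UNIV \<phi>"
    and phid: "\<And>t. ((\<lambda>t. \<phi> (x + t *\<^sub>R e)) has_real_derivative h (x + t *\<^sub>R e)) (at t)"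
  shows "((\<lambda>t. psi t * (mesa c T a b \<alpha> (x + t *\<^sub>R e) * h (x + t *\<^sub>R e))
           + psid t * (mesa c T a b \<alpha> (x + t *\<^sub>R e) * \<phi> (x + t *\<^sub>R e))
           + psi t * (gf c T a b \<alpha> e (x + t *\<^sub>R e) * \<phi> (x + t *\<^sub>R e))) has_integral 0) UNIV"
proof -
  define U where "U = mesa c T a b \<alpha>"
  define g where "g = gf c T a b \<alpha> e"
  define \<rho> where "\<rho> t = norm (x + t *\<^sub>R e - c)" for t
  define P where "P = mesa_profile T a b \<alpha>"
  define Q where "Q t = psi t * (U (x + t *\<^sub>R e) * h (x + t *\<^sub>R e))
           + psid t * (U (x + t *\<^sub>R e) * \<phi> (x + t *\<^sub>R e))
           + psi t * (g (x + t *\<^sub>R e) * \<phi> (x + t *\<^sub>R e))" for t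
  define F where "F t = psi t * U (x + t *\<^sub>R e) * \<phi> (x + t *\<^sub>R e)" for t
  obtain \<delta> where \<delta>: "\<delta> > 0" "\<forall>t\<in>{-1..1}. \<delta> \<le> \<rho> t"
    using line_dist_pos[OF xL] unfolding \<rho>_def by blast
  have rpos: "\<rho> t > 0" for t using xL unfolding \<rho>_def by auto
  have Ul: "U (x + t *\<^sub>R e) = P (\<rho> t)" for t
    using xL unfolding U_def P_def \<rho>_def mesa_def by auto
  define S where "S = {0} \<union> (\<Union>r\<in>Bset T a b \<alpha> \<inter> {\<delta>..}. {t. norm (x + t *\<^sub>R e - c) = r})"
  have Sfin: "finite S" unfolding S_def
    using Bset_fin[OF Tpos ab apos \<delta>(1)] fiber_finite[OF e] by auto
  have rho_d: "(\<rho> has_real_derivative ((x + t *\<^sub>R e - c) \<bullet> e) / \<rho> t) (at t)" for t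
    unfolding \<rho>_def by (rule norm_line_deriv) (use xL in auto)
  have Ud: "((\<lambda>t. U (x + t *\<^sub>R e)) has_real_derivative g (x + t *\<^sub>R e)) (at t)"
    if t: "t \<in> {-1<..<1} - S" for t
  proof -
    have "\<rho> t \<ge> \<delta>" using \<delta> t by auto
    then have nB: "\<rho> t \<notin> Bset T a b \<alpha>" using t unfolding S_def \<rho>_def by auto
    have Pd: "(P has_real_derivative Dp T a b \<alpha> (\<rho> t)) (at (\<rho> t))"
      using D_diff[OF Tpos ab apos rpos nB] unfolding P_def by blast
    have "((\<lambda>t. P (\<rho> t)) has_real_derivative Dp T a b \<alpha> (\<rho> t) * (((x + t *\<^sub>R e - c) \<bullet> e) / \<rho> t)) (at t)"
      by (rule DERIV_chain2[OF Pd rho_d])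
    moreover have "Dp T a b \<alpha> (\<rho> t) * (((x + t *\<^sub>R e - c) \<bullet> e) / \<rho> t) = g (x + t *\<^sub>R e)"
      using xL unfolding g_def gf_def \<rho>_def by auto
    ultimately show ?thesis unfolding Ul by simp
  qed
  have Fd: "(F has_vector_derivative Q t) (at t)" if t: "t \<in> {-1<..<1} - S" for t
  proof -
    have t0: "t \<in> {-1<..<1} - {0}" using t unfolding S_def by auto
    have "(F has_real_derivative (psid t * U (x + t *\<^sub>R e) + g (x + t *\<^sub>R e) * psi t) * \<phi> (x + t *\<^sub>R e)
            + h (x + t *\<^sub>R e) * (psi t * U (x + t *\<^sub>R e))) (at t)"
      unfolding F_def
      by (rule DERIV_mult[OF DERIV_mult[OF psi_deriv[OF t0] Ud[OF t]] phid])
    moreover have "(psid t * U (x + t *\<^sub>R e) + g (x + t *\<^sub>R e) * psi t) * \<phi> (x + t *\<^sub>R e)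
            + h (x + t *\<^sub>R e) * (psi t * U (x + t *\<^sub>R e)) = Q t"
      unfolding Q_def by (simp add: algebra_simps)
    ultimately show ?thesis by (simp add: has_real_derivative_iff_has_vector_derivative)
  qed
  have Fc: "continuous_on {-1..1} F"
  proof (intro continuous_at_imp_continuous_on ballI)
    fix t :: real
    have c1: "isCont psi t" using psi_cont[of UNIV] by (simp add: continuous_on_eq_continuous_at)
    have c2: "isCont (\<lambda>t. U (x + t *\<^sub>R e)) t"
    proof -
      have "isCont \<rho> t" unfolding \<rho>_def by (intro continuous_intros)
      moreover have "isCont P (\<rho> t)" unfolding P_def by (rule P_isCont[OF Tpos ab apos rpos])
      ultimately have "isCont (\<lambda>t. P (\<rho> t)) t" by (rule isCont_o2)
      then show ?thesis unfolding Ul .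
    qed
    have c3: "isCont (\<lambda>t. \<phi> (x + t *\<^sub>R e)) t"
    proof -
      have "isCont \<phi> (x + t *\<^sub>R e)" using phic by (simp add: continuous_on_eq_continuous_at)
      moreover have "isCont (\<lambda>t. x + t *\<^sub>R e) t" by (intro continuous_intros)
      ultimately show ?thesis using isCont_o2 by blast
    qed
    show "isCont F t" unfolding F_def using c1 c2 c3 by (intro continuous_intros)
  qed
  have "(Q has_integral (F 1 - F (-1))) {-1..1}"
    by (rule fundamental_theorem_of_calculus_interior_strong[OF Sfin _ Fd Fc]) auto
  then have I: "(Q has_integral 0) {-1..1}" by (simp add: F_def psi_def)
  have "(Q has_integral 0) UNIV"
  proof (rule has_integral_on_superset[OF I])
    fix t :: real assume "t \<notin> {-1..1}"
    then have "t \<notin> {-1<..<1}" by auto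
    then show "Q t = 0" unfolding Q_def using psi_zero psid_zero by simp
  qed auto
  then show ?thesis unfolding Q_def U_def g_def .
qed

context
  fixes T a b \<alpha> :: real and c e :: "real^'n"
  assumes Tpos: "T > 0" and ab: "a < b" and apos: "\<alpha> > 0" and e: "norm e = 1"
begin

lemma U_bound: "\<bar>mesa c T a b \<alpha> x\<bar> \<le> 2 * \<bar>a\<bar> + \<bar>b\<bar>"
  using P_bound[OF Tpos ab apos, of "norm (x - c)"] by (auto simp: mesa_def)

lemma U_supp: "x \<notin> ball c T \<Longrightarrow> mesa c T a b \<alpha> x = 0"
  using P_big[OF Tpos ab apos] Tpos by (auto simp: mesa_def dist_norm norm_minus_commute)

lemma U_borel: "mesa c T a b \<alpha> \<in> borel_measurable borel"
proof (rule borel_measurable_continuous_countable_exceptions[of "{c}"])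
  show "continuous_on (- {c}) (mesa c T a b \<alpha>)"
  proof (rule continuous_on_eq)
    show "continuous_on (- {c}) (\<lambda>x. mesa_profile T a b \<alpha> (norm (x - c)))"
    proof (intro continuous_at_imp_continuous_on ballI)
      fix x assume "x \<in> - {c}"
      then have "norm (x - c) > 0" by auto
      then have "isCont (mesa_profile T a b \<alpha>) (norm (x - c))" by (rule P_isCont[OF Tpos ab apos])
      moreover have "isCont (\<lambda>x. norm (x - c)) x" by (intro continuous_intros)
      ultimately show "isCont (\<lambda>x. mesa_profile T a b \<alpha> (norm (x - c))) x" using isCont_o2 by blast
    qed
  qed (auto simp: mesa_def)
qed auto

lemma g_borel: "gf c T a b \<alpha> e \<in> borel_measurable borel"
proof -
  have [measurable]: "Dp T a b \<alpha> \<in> borel_measurable borel" by (rule D_borel[OF Tpos ab apos])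
  show ?thesis unfolding gf_def by measurable
qed

lemma g_bound: "\<bar>gf c T a b \<alpha> e x\<bar> \<le> (\<alpha> * norm (x - c) powr (-\<alpha>-1) + 2 * \<bar>a\<bar> / T) * indicator (cball c T) x"
proof (cases "x = c")
  case True then show ?thesis using Tpos by (simp add: gf_def)
next
  case False
  then have r: "norm (x - c) > 0" by auto
  have "\<bar>(x - c) \<bullet> e\<bar> \<le> norm (x - c)" using Cauchy_Schwarz_ineq2[of "x - c" e] e by simp
  then have q: "\<bar>((x - c) \<bullet> e) / norm (x - c)\<bar> \<le> 1" using r by (simp add: divide_le_eq_1)
  have "\<bar>gf c T a b \<alpha> e x\<bar> = \<bar>Dp T a b \<alpha> (norm (x - c))\<bar> * \<bar>((x - c) \<bullet> e) / norm (x - c)\<bar>"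
    using False by (simp add: gf_def abs_mult)
  also have "\<dots> \<le> \<bar>Dp T a b \<alpha> (norm (x - c))\<bar>" using mult_left_le[OF q, of "\<bar>Dp T a b \<alpha> (norm (x - c))\<bar>"] by simp
  finally have g1: "\<bar>gf c T a b \<alpha> e x\<bar> \<le> \<bar>Dp T a b \<alpha> (norm (x - c))\<bar>" .
  show ?thesis
  proof (cases "x \<in> cball c T")
    case True
    then show ?thesis using g1 D_bound[OF Tpos ab apos r] by simp
  next
    case False
    then have "T < norm (x - c)" by (auto simp: dist_norm norm_minus_commute)
    then show ?thesis using g1 D_big[OF Tpos ab apos] False by simp
  qed
qed

lemma g_int:
  assumes n: "2 * \<alpha> + 2 < real CARD('n)"
  shows "integrable lborel (gf c T a b \<alpha> e)" "integrable lborel (\<lambda>x. (gf c T a b \<alpha> e x)\<^sup>2)"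
proof -
  define ind where "ind = (indicator (cball c T) :: real^'n \<Rightarrow> real)"
  define K where "K = 2 * \<bar>a\<bar> / T"
  define g where "g = gf c T a b \<alpha> e"
  have K: "K \<ge> 0" using Tpos by (simp add: K_def)
  have I0: "integrable lborel ind" unfolding ind_def
    by (intro integrable_real_indicator) (use emeasure_lborel_cball_finite[of c T] in auto)
  have I1': "integrable lborel (\<lambda>x. ind x * norm (x - c) powr (-(\<alpha>+1)))"
    unfolding ind_def by (rule powr_integrable_ball) (use apos n Tpos in auto)
  have mm: "-(\<alpha>+1) = -\<alpha>-1" by simp
  note I1 = I1'[unfolded mm]
  have I2: "integrable lborel (\<lambda>x. ind x * norm (x - c) powr (-(2*\<alpha>+2)))"
    unfolding ind_def by (rule powr_integrable_ball) (use apos n Tpos in auto)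
  have gm: "g \<in> borel_measurable lborel" using g_borel unfolding g_def by simp
  have ind01: "ind x = 0 \<or> ind x = 1" for x unfolding ind_def by (simp add: indicator_def)
  have gb: "\<bar>g x\<bar> \<le> (\<alpha> * norm (x - c) powr (-\<alpha>-1) + K) * ind x" for x
    using g_bound[of x] unfolding g_def ind_def K_def by (simp only: mult.commute)
  have B1: "integrable lborel (\<lambda>x. \<alpha> * (ind x * norm (x - c) powr (-\<alpha>-1)) + K * ind x)"
    using I0 I1 by (intro Bochner_Integration.integrable_add Bochner_Integration.integrable_mult_right)
  show "integrable lborel (gf c T a b \<alpha> e)" unfolding g_def[symmetric]
  proof (rule Bochner_Integration.integrable_bound[OF B1 gm], rule AE_I2)
    fix x
    have "\<bar>g x\<bar> \<le> \<alpha> * (ind x * norm (x - c) powr (-\<alpha>-1)) + K * ind x"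
      using gb[of x] by (simp add: algebra_simps)
    moreover have "0 \<le> \<alpha> * (ind x * norm (x - c) powr (-\<alpha>-1)) + K * ind x"
      using apos K ind01[of x] by auto
    ultimately show "norm (g x) \<le> norm (\<alpha> * (ind x * norm (x - c) powr (-\<alpha>-1)) + K * ind x)" by simp
  qed
  have B2: "integrable lborel (\<lambda>x. 2 * \<alpha>\<^sup>2 * (ind x * norm (x - c) powr (-(2*\<alpha>+2))) + 2 * K\<^sup>2 * ind x)"
    using I0 I2 by (intro Bochner_Integration.integrable_add Bochner_Integration.integrable_mult_right)
  have g2m: "(\<lambda>x. (g x)\<^sup>2) \<in> borel_measurable lborel" using gm by measurable
  show "integrable lborel (\<lambda>x. (gf c T a b \<alpha> e x)\<^sup>2)" unfolding g_def[symmetric]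
  proof (rule Bochner_Integration.integrable_bound[OF B2 g2m], rule AE_I2)
    fix x
    define r where "r = norm (x - c) powr (-\<alpha>-1)"
    have r0: "r \<ge> 0" unfolding r_def by simp
    have rr: "r\<^sup>2 = norm (x - c) powr (-(2*\<alpha>+2))"
      unfolding r_def power2_eq_square by (simp add: powr_add[symmetric])
    have B0: "0 \<le> (\<alpha> * r + K) * ind x" using apos K r0 ind01[of x] by auto
    have "(g x)\<^sup>2 = \<bar>g x\<bar>\<^sup>2" by simp
    also have "\<dots> \<le> ((\<alpha> * r + K) * ind x)\<^sup>2"
      using gb[of x] unfolding r_def[symmetric] by (intro power_mono) auto
    also have "\<dots> = (\<alpha> * r + K)\<^sup>2 * ind x" using ind01[of x] by (auto simp: power_mult_distrib)
    also have "\<dots> \<le> (2 * \<alpha>\<^sup>2 * r\<^sup>2 + 2 * K\<^sup>2) * ind x"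
    proof (rule mult_right_mono)
      have "0 \<le> (\<alpha> * r - K)\<^sup>2" by simp
      then show "(\<alpha> * r + K)\<^sup>2 \<le> 2 * \<alpha>\<^sup>2 * r\<^sup>2 + 2 * K\<^sup>2"
        by (simp add: power2_eq_square algebra_simps)
      show "0 \<le> ind x" using ind01[of x] by auto
    qed
    also have "\<dots> = 2 * \<alpha>\<^sup>2 * (ind x * norm (x - c) powr (-(2*\<alpha>+2))) + 2 * K\<^sup>2 * ind x"
      unfolding rr by (simp add: algebra_simps)
    finally have le: "(g x)\<^sup>2 \<le> 2 * \<alpha>\<^sup>2 * (ind x * norm (x - c) powr (-(2*\<alpha>+2))) + 2 * K\<^sup>2 * ind x" .
    then show "norm ((g x)\<^sup>2) \<le> norm (2 * \<alpha>\<^sup>2 * (ind x * norm (x - c) powr (-(2*\<alpha>+2))) + 2 * K\<^sup>2 * ind x)"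
      by simp
  qed
qed

end

lemma on_Omega:
  fixes f :: "real^'n \<Rightarrow> real"
  assumes O: "open \<Omega>" and fm: "f \<in> borel_measurable borel" and fi: "integrable lborel f"
    and z: "\<And>x. x \<notin> \<Omega> \<Longrightarrow> f x = 0"
  shows "integrable (lebesgue_on \<Omega>) f" "integral\<^sup>L (lebesgue_on \<Omega>) f = integral\<^sup>L lborel f"
proof -
  have Os: "\<Omega> \<inter> space lebesgue \<in> sets lebesgue" using O by simp
  have eq: "(\<lambda>x. indicator \<Omega> x *\<^sub>R f x) = f"
  proof
    fix x show "indicator \<Omega> x *\<^sub>R f x = f x" using z[of x] by (cases "x \<in> \<Omega>") auto
  qed
  have fl: "f \<in> lborel \<rightarrow>\<^sub>M borel" using fm by simp
  show "integrable (lebesgue_on \<Omega>) f"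
    unfolding integrable_restrict_space[OF Os] eq integrable_completion[OF fl] by (rule fi)
  show "integral\<^sup>L (lebesgue_on \<Omega>) f = integral\<^sup>L lborel f"
    unfolding integral_restrict_space[OF Os] eq integral_completion[OF fl] ..
qed

lemma meas_on_Omega:
  fixes f :: "real^'n \<Rightarrow> real"
  assumes fm: "f \<in> borel_measurable borel"
  shows "f \<in> borel_measurable (lebesgue_on \<Omega>)"
  using fm by (intro measurable_restrict_space1 measurable_completion) simp

lemma main_identity:
  fixes c e :: "real^'n" and \<phi> h :: "real^'n \<Rightarrow> real"
  assumes Tpos: "T > 0" and ab: "a < b" and apos: "\<alpha> > 0" and e: "norm e = 1"
    and n2: "CARD('n) \<ge> 2" and na: "2 * \<alpha> + 2 < real CARD('n)"
    and phic: "continuous_on UNIV \<phi>" and hc: "continuous_on UNIV h"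
    and phib: "\<And>x. \<bar>\<phi> x\<bar> \<le> B1" and hb: "\<And>x. \<bar>h x\<bar> \<le> B2"
    and phid: "\<And>x t. ((\<lambda>t. \<phi> (x + t *\<^sub>R e)) has_real_derivative h (x + t *\<^sub>R e)) (at t)"
  shows "integrable lborel (\<lambda>x. mesa c T a b \<alpha> x * h x)"
    "integrable lborel (\<lambda>x. gf c T a b \<alpha> e x * \<phi> x)"
    "(\<integral>x. mesa c T a b \<alpha> x * h x \<partial>lborel) = - (\<integral>x. gf c T a b \<alpha> e x * \<phi> x \<partial>lborel)"
proof -
  define U where "U = mesa c T a b \<alpha>"
  define g where "g = gf c T a b \<alpha> e"
  define M where "M = 2 * \<bar>a\<bar> + \<bar>b\<bar>"
  define ind where "ind = (indicator (cball c T) :: real^'n \<Rightarrow> real)"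
  have Ub: "\<bar>U x\<bar> \<le> M" for x unfolding U_def M_def by (rule U_bound[OF Tpos ab apos e])
  have Uz: "U x = 0" if "x \<notin> cball c T" for x
    unfolding U_def by (rule U_supp[OF Tpos ab apos e]) (use that in auto)
  have Um[measurable]: "U \<in> borel_measurable borel" unfolding U_def by (rule U_borel[OF Tpos ab apos e])
  have gm[measurable]: "g \<in> borel_measurable borel" unfolding g_def by (rule g_borel[OF Tpos ab apos e])
  have phim[measurable]: "\<phi> \<in> borel_measurable borel" by (rule borel_measurable_continuous_onI[OF phic])
  have hm[measurable]: "h \<in> borel_measurable borel" by (rule borel_measurable_continuous_onI[OF hc])
  have gi: "integrable lborel g" unfolding g_def by (rule g_int(1)[OF Tpos ab apos e na])
  have I0: "integrable lborel ind" unfolding ind_def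
    by (intro integrable_real_indicator) (use emeasure_lborel_cball_finite[of c T] in auto)
  have ind01: "ind x = 0 \<or> ind x = 1" for x unfolding ind_def by (simp add: indicator_def)
  have bnd_supp: "integrable lborel (\<lambda>x. U x * k x)" if km: "k \<in> borel_measurable borel" and kb: "\<And>x. \<bar>k x\<bar> \<le> B" for k B
  proof (rule Bochner_Integration.integrable_bound[of _ "\<lambda>x. (M * B) * ind x"])
    show "integrable lborel (\<lambda>x. (M * B) * ind x)" using I0 by simp
    show "(\<lambda>x. U x * k x) \<in> borel_measurable lborel" using km by simp
    show "AE x in lborel. norm (U x * k x) \<le> norm (M * B * ind x)"
    proof (rule AE_I2)
      fix x
      show "norm (U x * k x) \<le> norm (M * B * ind x)"
      proof (cases "x \<in> cball c T")
        case True
        have "\<bar>U x * k x\<bar> \<le> M * B" unfolding abs_mult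
          using Ub[of x] kb[of x] by (intro mult_mono) auto
        then show ?thesis using True by (simp add: ind_def)
      next
        case False then show ?thesis using Uz by simp
      qed
    qed
  qed
  have f1: "integrable lborel (\<lambda>x. U x * h x)" by (rule bnd_supp[OF hm hb])
  have f2: "integrable lborel (\<lambda>x. U x * \<phi> x)" by (rule bnd_supp[OF phim phib])
  have f3: "integrable lborel (\<lambda>x. g x * \<phi> x)"
  proof (rule Bochner_Integration.integrable_bound[of _ "\<lambda>x. B1 * \<bar>g x\<bar>"])
    show "integrable lborel (\<lambda>x. B1 * \<bar>g x\<bar>)" using gi by simp
    show "(\<lambda>x. g x * \<phi> x) \<in> borel_measurable lborel" by simp
    show "AE x in lborel. norm (g x * \<phi> x) \<le> norm (B1 * \<bar>g x\<bar>)"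
    proof (rule AE_I2)
      fix x
      have "\<bar>g x * \<phi> x\<bar> \<le> \<bar>g x\<bar> * B1" unfolding abs_mult by (intro mult_left_mono phib) auto
      moreover have "0 \<le> B1" using phib[of x] by linarith
      ultimately show "norm (g x * \<phi> x) \<le> norm (B1 * \<bar>g x\<bar>)" by (simp add: abs_mult mult.commute)
    qed
  qed
  show "integrable lborel (\<lambda>x. mesa c T a b \<alpha> x * h x)" using f1 unfolding U_def .
  show "integrable lborel (\<lambda>x. gf c T a b \<alpha> e x * \<phi> x)" using f3 unfolding g_def .
  define q1 where "q1 = (\<lambda>(t,x). psi t * (U (x + t *\<^sub>R e) * h (x + t *\<^sub>R e)))"
  define q2 where "q2 = (\<lambda>(t,x). psid t * (U (x + t *\<^sub>R e) * \<phi> (x + t *\<^sub>R e)))"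
  define q3 where "q3 = (\<lambda>(t,x). psi t * (g (x + t *\<^sub>R e) * \<phi> (x + t *\<^sub>R e)))"
  note G1 = fub_shift[OF f1 psi_integrable, of e, folded q1_def]
  note G2 = fub_shift[OF f2 psid_integrable, of e, folded q2_def]
  note G3 = fub_shift[OF f3 psi_integrable, of e, folded q3_def]
  define Q where "Q t x = psi t * (U (x + t *\<^sub>R e) * h (x + t *\<^sub>R e))
           + psid t * (U (x + t *\<^sub>R e) * \<phi> (x + t *\<^sub>R e))
           + psi t * (g (x + t *\<^sub>R e) * \<phi> (x + t *\<^sub>R e))" for t x
  have Qeq: "case_prod Q = (\<lambda>z. q1 z + q2 z + q3 z)"
    by (auto simp: Q_def q1_def q2_def q3_def)
  have QI: "integrable (lborel \<Otimes>\<^sub>M lborel) (case_prod Q)"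
    unfolding Qeq using G1(1) G2(1) G3(1) by (intro Bochner_Integration.integrable_add)
  have "integral\<^sup>L (lborel \<Otimes>\<^sub>M lborel) (case_prod Q)
      = integral\<^sup>L (lborel \<Otimes>\<^sub>M lborel) q1 + integral\<^sup>L (lborel \<Otimes>\<^sub>M lborel) q2 + integral\<^sup>L (lborel \<Otimes>\<^sub>M lborel) q3"
    unfolding Qeq using G1(1) G2(1) G3(1) by (simp add: Bochner_Integration.integral_add)
  also have "\<dots> = (\<integral>x. U x * h x \<partial>lborel) + (\<integral>x. g x * \<phi> x \<partial>lborel)"
    using G1(2) G2(2) G3(2) unfolding q1_def[symmetric] q2_def[symmetric] q3_def[symmetric]
    by (simp add: psi_integral psid_integral)
  finally have A: "integral\<^sup>L (lborel \<Otimes>\<^sub>M lborel) (case_prod Q) = (\<integral>x. U x * h x \<partial>lborel) + (\<integral>x. g x * \<phi> x \<partial>lborel)" .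
  have B: "integral\<^sup>L (lborel \<Otimes>\<^sub>M lborel) (case_prod Q) = (\<integral>x. (\<integral>t. Q t x \<partial>lborel) \<partial>lborel)"
    using lborel_pair.integral_snd[OF QI] by simp
  have AEi: "AE x in lborel. integrable lborel (\<lambda>t. Q t x)" by (rule lborel_pair.AE_integrable_snd[OF QI])
  have AEL: "AE x in lborel. \<forall>t. x + t *\<^sub>R e \<noteq> c"
  proof -
    have "{x. \<exists>t. x + t *\<^sub>R e = c} \<in> null_sets lebesgue"
      using line_negligible[OF n2, of e c] unfolding negligible_iff_null_sets .
    then have "AE x in lebesgue. x \<notin> {x. \<exists>t. x + t *\<^sub>R e = c}" by (rule AE_not_in)
    then show ?thesis unfolding AE_completion_iff by simp
  qed
  have "AE x in lborel. (\<integral>t. Q t x \<partial>lborel) = 0"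
    using AEi AEL
  proof eventually_elim
    case (elim x)
    have "((\<lambda>t. Q t x) has_integral 0) UNIV"
      unfolding Q_def U_def g_def
      by (rule line_ibp[OF Tpos ab apos e elim(2) phic phid])
    moreover have "((\<lambda>t. Q t x) has_integral (\<integral>t. Q t x \<partial>lborel)) UNIV"
      by (rule has_integral_integral_lborel[OF elim(1)])
    ultimately show ?case using has_integral_unique by blast
  qed
  then have "(\<integral>x. (\<integral>t. Q t x \<partial>lborel) \<partial>lborel) = 0" by (rule integral_eq_zero_AE)
  then have "(\<integral>x. U x * h x \<partial>lborel) + (\<integral>x. g x * \<phi> x \<partial>lborel) = 0" using A B by simp
  then show "(\<integral>x. mesa c T a b \<alpha> x * h x \<partial>lborel) = - (\<integral>x. gf c T a b \<alpha> e x * \<phi> x \<partial>lborel)"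
    unfolding U_def g_def by linarith
qed

lemma cont_supp_bounded:
  fixes f :: "real^'n \<Rightarrow> real"
  assumes "continuous_on UNIV f" "compact K" "\<And>x. x \<notin> K \<Longrightarrow> f x = 0"
  shows "\<exists>B. \<forall>x. \<bar>f x\<bar> \<le> B"
proof -
  have "compact (f ` K)" by (rule compact_continuous_image[OF continuous_on_subset[OF assms(1)] assms(2)]) auto
  then obtain B where B: "\<forall>y\<in>f ` K. norm y \<le> B" using compact_imp_bounded bounded_iff by metis
  have "\<bar>f x\<bar> \<le> max B 0" for x
  proof (cases "x \<in> K")
    case True then show ?thesis using B by force
  next
    case False then show ?thesis using assms(3) by simp
  qed
  then show ?thesis by blast
qed

lemma test_fun_facts:
  fixes \<phi> :: "real^'n \<Rightarrow> real"
  assumes "test_fun \<Omega> \<phi>"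
  shows "\<And>x. \<phi> differentiable (at x)" "continuous_on UNIV \<phi>" "continuous_on UNIV (pderiv_i i \<phi>)"
    "\<exists>B. \<forall>x. \<bar>\<phi> x\<bar> \<le> B" "\<exists>B. \<forall>x. \<bar>pderiv_i i \<phi> x\<bar> \<le> B"
proof -
  have d: "\<And>is x. foldr pderiv_i is \<phi> differentiable (at x)"
    and K: "\<exists>K. compact K \<and> K \<subseteq> \<Omega> \<and> (\<forall>x. x \<notin> K \<longrightarrow> \<phi> x = 0)"
    using assms unfolding test_fun_def by blast+
  show d0: "\<And>x. \<phi> differentiable (at x)" using d[of "[]"] by simp
  have d1: "\<And>x. pderiv_i i \<phi> differentiable (at x)" using d[of "[i]"] by simp
  show c0: "continuous_on UNIV \<phi>"
    by (intro continuous_at_imp_continuous_on ballI differentiable_imp_continuous_within d0)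
  show c1: "continuous_on UNIV (pderiv_i i \<phi>)"
    by (intro continuous_at_imp_continuous_on ballI differentiable_imp_continuous_within d1)
  obtain K where K: "compact K" "\<And>x. x \<notin> K \<Longrightarrow> \<phi> x = 0" using K by blast
  have hz: "pderiv_i i \<phi> x = 0" if x: "x \<notin> K" for x
  proof -
    have "((\<lambda>_. 0) has_derivative (\<lambda>_. 0)) (at x)" by simp
    then have "(\<phi> has_derivative (\<lambda>_. 0)) (at x)"
      by (rule has_derivative_transform_within_open[of _ _ _ _ "- K"])
         (use x K in \<open>auto intro: compact_imp_closed\<close>)
    then have "(\<lambda>_. 0) = frechet_derivative \<phi> (at x)" by (rule frechet_derivative_at)
    then show ?thesis unfolding pderiv_i_def by (metis)
  qed
  show "\<exists>B. \<forall>x. \<bar>\<phi> x\<bar> \<le> B" by (rule cont_supp_bounded[OF c0 K(1) K(2)])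
  show "\<exists>B. \<forall>x. \<bar>pderiv_i i \<phi> x\<bar> \<le> B" by (rule cont_supp_bounded[OF c1 K(1) hz])
qed

theorem lemma1p1:
  fixes \<Omega> :: "(real^'n::finite) set"
    and c :: "real^'n" and T a b \<alpha> :: real
  assumes "CARD('n) > 2"
    and "open \<Omega>" and "connected \<Omega>"
    and "c \<in> \<Omega>" and "T > 0" and "cball c T \<subseteq> \<Omega>"
    and "a < b"
    and "0 < \<alpha>" and "\<alpha> < (real CARD('n) - 2) / 2"
  shows "H1 \<Omega> (mesa c T a b \<alpha>)"
proof -
  note Tpos = assms(5) and ab = assms(7) and apos = assms(8) and O = assms(2) and sub = assms(6)
  have n2: "CARD('n) \<ge> 2" using assms(1) by simp
  have na: "2 * \<alpha> + 2 < real CARD('n)" using assms(9) by (simp add: field_simps)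
  define U where "U = mesa c T a b \<alpha>"
  define M where "M = 2 * \<bar>a\<bar> + \<bar>b\<bar>"
  have e1: "norm (axis i (1::real) :: real^'n) = 1" for i by simp
  have Ub: "\<bar>U x\<bar> \<le> M" for x unfolding U_def M_def by (rule U_bound[OF Tpos ab apos e1])
  have Uz: "U x = 0" if "x \<notin> cball c T" for x
    unfolding U_def by (rule U_supp[OF Tpos ab apos e1]) (use that in auto)
  have UzO: "U x = 0" if "x \<notin> \<Omega>" for x proof - have "x \<notin> cball c T" using sub that by blast then show ?thesis by (rule Uz) qed
  have Um[measurable]: "U \<in> borel_measurable borel" unfolding U_def by (rule U_borel[OF Tpos ab apos e1])
  have U2: "integrable lborel (\<lambda>x. (U x)\<^sup>2)"
  proof (rule Bochner_Integration.integrable_bound[of _ "\<lambda>x. M\<^sup>2 * indicator (cball c T) x"])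
    show "integrable lborel (\<lambda>x. M\<^sup>2 * indicator (cball c T) x :: real)"
      using emeasure_lborel_cball_finite[of c T] by (intro Bochner_Integration.integrable_mult_right integrable_real_indicator) auto
    show "(\<lambda>x. (U x)\<^sup>2) \<in> borel_measurable lborel" by simp
    show "AE x in lborel. norm ((U x)\<^sup>2) \<le> norm (M\<^sup>2 * indicator (cball c T) x :: real)"
    proof (rule AE_I2)
      fix x
      show "norm ((U x)\<^sup>2) \<le> norm (M\<^sup>2 * indicator (cball c T) x :: real)"
      proof (cases "x \<in> cball c T")
        case True
        have "\<bar>U x\<bar>\<^sup>2 \<le> M\<^sup>2" using Ub[of x] by (intro power_mono) auto
        then show ?thesis using True by simp
      next
        case False then show ?thesis using Uz by simp
      qed
    qed
  qed
  have L2U: "L2_on \<Omega> U"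
    unfolding L2_on_def
    by (intro conjI meas_on_Omega Um on_Omega(1)[OF O _ U2]) (use UzO in auto)
  have deriv: "\<exists>g. L2_on \<Omega> g \<and> weak_pderiv \<Omega> i U g" for i
  proof -
    define e where "e = (axis i 1 :: real^'n)"
    have e: "norm e = 1" unfolding e_def by simp
    define g where "g = gf c T a b \<alpha> e"
    have gm[measurable]: "g \<in> borel_measurable borel" unfolding g_def by (rule g_borel[OF Tpos ab apos e])
    have gz: "g x = 0" if "x \<notin> \<Omega>" for x
    proof -
      have "x \<notin> cball c T" using that sub by auto
      then show ?thesis using g_bound[OF Tpos ab apos e, of c x] unfolding g_def by simp
    qed
    have g2: "integrable lborel (\<lambda>x. (g x)\<^sup>2)" unfolding g_def by (rule g_int(2)[OF Tpos ab apos e na])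
    have L2g: "L2_on \<Omega> g"
      unfolding L2_on_def
      by (intro conjI meas_on_Omega gm on_Omega(1)[OF O _ g2]) (use gz in auto)
    have W: "weak_pderiv \<Omega> i U g"
      unfolding weak_pderiv_def
    proof (intro allI impI)
      fix \<phi> :: "real^'n \<Rightarrow> real"
      assume tf: "test_fun \<Omega> \<phi>"
      note TF = test_fun_facts[OF tf]
      define h where "h = pderiv_i i \<phi>"
      obtain B1 where B1: "\<And>x. \<bar>\<phi> x\<bar> \<le> B1" using TF(4) by blast
      obtain B2 where B2: "\<And>x. \<bar>h x\<bar> \<le> B2" using TF(5)[of i] unfolding h_def by blast
      have phid: "((\<lambda>t. \<phi> (x + t *\<^sub>R e)) has_real_derivative h (x + t *\<^sub>R e)) (at t)" for x t
        using phi_line_deriv[OF TF(1)[of "x + t *\<^sub>R e"]] unfolding h_def pderiv_i_def e_def .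
      note MI = main_identity[OF Tpos ab apos e n2 na TF(2) TF(3)[of i, folded h_def] B1 B2 phid]
      have hm[measurable]: "h \<in> borel_measurable borel"
        unfolding h_def by (rule borel_measurable_continuous_onI[OF TF(3)[of i]])
      have phim[measurable]: "\<phi> \<in> borel_measurable borel" by (rule borel_measurable_continuous_onI[OF TF(2)])
      have i1: "integrable lborel (\<lambda>x. U x * h x)" using MI(1) unfolding U_def .
      have i2: "integrable lborel (\<lambda>x. g x * \<phi> x)" using MI(2) unfolding g_def .
      have z1: "U x * h x = 0" if "x \<notin> \<Omega>" for x using UzO[OF that] by simp
      have z2: "g x * \<phi> x = 0" if "x \<notin> \<Omega>" for x using gz[OF that] by simp
      have m1: "(\<lambda>x. U x * h x) \<in> borel_measurable borel" by simp
      have m2: "(\<lambda>x. g x * \<phi> x) \<in> borel_measurable borel" by simp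
      note O1 = on_Omega[OF O m1 i1 z1] and O2 = on_Omega[OF O m2 i2 z2]
      show "integrable (lebesgue_on \<Omega>) (\<lambda>x. U x * pderiv_i i \<phi> x) \<and>
            integrable (lebesgue_on \<Omega>) (\<lambda>x. g x * \<phi> x) \<and>
            (\<integral>x. U x * pderiv_i i \<phi> x \<partial>lebesgue_on \<Omega>) = - (\<integral>x. g x * \<phi> x \<partial>lebesgue_on \<Omega>)"
        unfolding h_def[symmetric] using O1 O2 MI(3) unfolding U_def g_def by simp
    qed
    show ?thesis using L2g W by blast
  qed
  show ?thesis unfolding H1_def U_def[symmetric] using L2U deriv by blast
qed

end
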